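(* Let $(G,H)$ be a discrete Hecke pair and let $\Gamma$ be a group containing $G$ as a closed finite index subgroup such that $(\Gamma,H)$ is also a discrete Hecke pair. Then $(G,H)$ has property (RD) if and only if $(\Gamma,H)$ has property (RD).
   Context: A discrete Hecke pair is a group $G$ with a subgroup $H$ such that $[H:H\cap xHx^{-1}]<\infty$ for all $x\in G$. The Hecke algebra $\mathcal H(G,H)$ consists of finitely supported right $H$-invariant functions on $H\backslash G$ with product $f*g(Hx)=\sum_{Hy\in H\backslash G}f(Hxy^{-1})g(Hy)$, and $\lambda(f)\xi=f*\xi$ on $\ell^2(H\backslash G)$. A length function on $(G,H)$ is $l:G\to[0,\infty)$ with $l(e)=0$, $l(g)=l(g^{-1})$, $l(gh)\le l(g)+l(h)$ and $l|_H=0$. $(G,H)$ has property (RD) if there exist such $l$ and $s,c>0$ with $\|\lambda(f)\|\le c\big(\sum_{Hx\in H\backslash G}|f(Hx)|^2(1+l(x))^{2s}\big)^{1/2}$ for all $f\in\mathcal H(G,H)$. *)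

theory Defs
  imports "HOL-Analysis.Analysis" "HOL-Algebra.Coset"
begin

text \<open>Everything lives inside an ambient group Gam (a HOL-Algebra group); the groups
of the Hecke pairs are subgroups K of it. Right cosets Hx are r_coset.\<close>

definition hecke_pair :: "('a, 'b) monoid_scheme \<Rightarrow> 'a set \<Rightarrow> 'a set \<Rightarrow> bool" where
  "hecke_pair Gam K H \<longleftrightarrow> subgroup K Gam \<and> subgroup H Gam \<and> H \<subseteq> K \<and>
     (\<forall>x\<in>K. finite ((\<lambda>h. (H \<inter> (\<lambda>k. x \<otimes>\<^bsub>Gam\<^esub> k \<otimes>\<^bsub>Gam\<^esub> inv\<^bsub>Gam\<^esub> x) ` H) #>\<^bsub>Gam\<^esub> h) ` H))"

definition coset_space :: "('a, 'b) monoid_scheme \<Rightarrow> 'a set \<Rightarrow> 'a set \<Rightarrow> 'a set set" where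
  "coset_space Gam K H = (\<lambda>x. H #>\<^bsub>Gam\<^esub> x) ` K"

definition rep :: "'a set \<Rightarrow> 'a" where
  "rep c = (SOME y. y \<in> c)"

definition hecke_algebra :: "('a, 'b) monoid_scheme \<Rightarrow> 'a set \<Rightarrow> 'a set \<Rightarrow> ('a set \<Rightarrow> complex) set" where
  "hecke_algebra Gam K H = {f.
     (\<forall>c. c \<notin> coset_space Gam K H \<longrightarrow> f c = 0) \<and>
     finite {c. f c \<noteq> 0} \<and>
     (\<forall>x\<in>K. \<forall>h\<in>H. f (H #>\<^bsub>Gam\<^esub> (x \<otimes>\<^bsub>Gam\<^esub> h)) = f (H #>\<^bsub>Gam\<^esub> x))}"

definition hconv :: "('a, 'b) monoid_scheme \<Rightarrow> 'a set \<Rightarrow> 'a set \<Rightarrow> ('a set \<Rightarrow> complex) \<Rightarrow> ('a set \<Rightarrow> complex) \<Rightarrow> 'a set \<Rightarrow> complex" where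
  "hconv Gam K H f xi c = (\<Sum>\<^sub>\<infinity>d\<in>coset_space Gam K H.
      f (H #>\<^bsub>Gam\<^esub> (rep c \<otimes>\<^bsub>Gam\<^esub> inv\<^bsub>Gam\<^esub> (rep d))) * xi d)"

definition in_l2 :: "'a set set \<Rightarrow> ('a set \<Rightarrow> complex) \<Rightarrow> bool" where
  "in_l2 S xi \<longleftrightarrow> (\<lambda>c. (cmod (xi c))\<^sup>2) summable_on S"

definition l2_norm :: "'a set set \<Rightarrow> ('a set \<Rightarrow> complex) \<Rightarrow> real" where
  "l2_norm S xi = sqrt (\<Sum>\<^sub>\<infinity>c\<in>S. (cmod (xi c))\<^sup>2)"

definition length_function :: "('a, 'b) monoid_scheme \<Rightarrow> 'a set \<Rightarrow> 'a set \<Rightarrow> ('a \<Rightarrow> real) \<Rightarrow> bool" where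
  "length_function Gam K H l \<longleftrightarrow>
     (\<forall>g\<in>K. l g \<ge> 0) \<and> l \<one>\<^bsub>Gam\<^esub> = 0 \<and>
     (\<forall>g\<in>K. l g = l (inv\<^bsub>Gam\<^esub> g)) \<and>
     (\<forall>g\<in>K. \<forall>h\<in>K. l (g \<otimes>\<^bsub>Gam\<^esub> h) \<le> l g + l h) \<and>
     (\<forall>h\<in>H. l h = 0)"

text \<open>Property (RD): operator norm of lambda(f) on l^2(H\K) bounded by the weighted
  l^2 norm, written out as the operator-norm inequality for all xi in l^2(H\K).\<close>
definition property_RD :: "('a, 'b) monoid_scheme \<Rightarrow> 'a set \<Rightarrow> 'a set \<Rightarrow> bool" where
  "property_RD Gam K H \<longleftrightarrow> (\<exists>l s C. length_function Gam K H l \<and> s > 0 \<and> C > 0 \<and>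
     (\<forall>f\<in>hecke_algebra Gam K H. \<forall>xi. in_l2 (coset_space Gam K H) xi \<longrightarrow>
        l2_norm (coset_space Gam K H) (hconv Gam K H f xi)
          \<le> C * sqrt (\<Sum>\<^sub>\<infinity>c\<in>coset_space Gam K H. (cmod (f c))\<^sup>2 * (1 + l (rep c)) powr (2 * s))
              * l2_norm (coset_space Gam K H) xi))"

end

theory Submission imports Defs begin

locale hk = group +
  fixes H :: "'a set"
  assumes subH: "subgroup H G"
    and heck: "\<And>x. x \<in> carrier G \<Longrightarrow> finite ((\<lambda>h. (H \<inter> (\<lambda>k. x \<otimes> k \<otimes> inv x) ` H) #> h) ` H)"
begin

lemma H_carr: "H \<subseteq> carrier G" by (rule subgroup.subset[OF subH])
lemma H_mem: "h \<in> H \<Longrightarrow> h \<in> carrier G" using H_carr by auto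
lemma H_one: "\<one> \<in> H" by (rule subgroup.one_closed[OF subH])
lemma H_mult: "h \<in> H \<Longrightarrow> k \<in> H \<Longrightarrow> h \<otimes> k \<in> H" by (rule subgroup.m_closed[OF subH])
lemma H_inv: "h \<in> H \<Longrightarrow> inv h \<in> H" by (rule subgroup.m_inv_closed[OF subH])

lemma rc_self: "x \<in> carrier G \<Longrightarrow> x \<in> H #> x" using rcos_self[OF _ subH] by simp

lemma rc_mem: "y \<in> H #> x \<longleftrightarrow> (\<exists>h\<in>H. y = h \<otimes> x)"
  unfolding r_coset_def by auto

lemma rc_eq_iff:
  assumes c: "x \<in> carrier G" "y \<in> carrier G"
  shows "H #> x = H #> y \<longleftrightarrow> x \<otimes> inv y \<in> H"
proof
  assume "H #> x = H #> y"
  then have "x \<in> H #> y" using c rc_self by auto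
  then show "x \<otimes> inv y \<in> H" using subgroup.rcos_module_imp[OF subH is_group c(2)] by blast
next
  assume "x \<otimes> inv y \<in> H"
  then have "x \<in> H #> y" using subgroup.rcos_module_rev[OF subH is_group c(2) c(1)] by blast
  then show "H #> x = H #> y" using repr_independence[OF _ c(2) subH] by simp
qed

lemma rc_left: "h \<in> H \<Longrightarrow> x \<in> carrier G \<Longrightarrow> H #> (h \<otimes> x) = H #> x"
  by (subst rc_eq_iff) (auto simp: m_assoc H_mem)

lemma rc_mult: "x \<in> carrier G \<Longrightarrow> y \<in> carrier G \<Longrightarrow> (H #> x) #> y = H #> (x \<otimes> y)"
  using coset_mult_assoc[OF H_carr] by simp

lemma rc_carr: "x \<in> carrier G \<Longrightarrow> H #> x \<subseteq> carrier G"
  using r_coset_subset_G[OF H_carr] by simp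

lemma rep_in: "x \<in> carrier G \<Longrightarrow> rep (H #> x) \<in> H #> x"
  unfolding rep_def using rc_self by (metis someI)

lemma rep_obtain: assumes "x \<in> carrier G" obtains h where "h \<in> H" "rep (H #> x) = h \<otimes> x"
  using rep_in[OF assms] rc_mem by blast

lemma rep_carr: "x \<in> carrier G \<Longrightarrow> rep (H #> x) \<in> carrier G"
  by (metis rep_obtain H_mem m_closed)

lemma rc_rep: "x \<in> carrier G \<Longrightarrow> H #> rep (H #> x) = H #> x"
  by (metis rep_obtain rc_left)

lemma cancel1: "x \<in> carrier G \<Longrightarrow> y \<in> carrier G \<Longrightarrow> x \<otimes> (inv x \<otimes> y) = y"
  by (simp add: m_assoc[symmetric])
lemma cancel2: "x \<in> carrier G \<Longrightarrow> y \<in> carrier G \<Longrightarrow> inv x \<otimes> (x \<otimes> y) = y"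
  by (simp add: m_assoc[symmetric])

definition Cs :: "'a \<Rightarrow> 'a set set" where
  "Cs x = (\<lambda>h. H #> (x \<otimes> h)) ` H"

definition N :: "'a \<Rightarrow> nat" where "N x = card (Cs x)"

lemma Cs_finite: assumes x: "x \<in> carrier G" shows "finite (Cs x)"
proof -
  define J where "J = H \<inter> (\<lambda>k. inv x \<otimes> k \<otimes> inv (inv x)) ` H"
  have fin: "finite ((\<lambda>h. J #> h) ` H)" unfolding J_def using heck[of "inv x"] x by simp
  define g where "g C = H #> (x \<otimes> (SOME h. h \<in> C))" for C
  have "Cs x \<subseteq> g ` ((\<lambda>h. J #> h) ` H)"
  proof
    fix c assume "c \<in> Cs x"
    then obtain h where h: "h \<in> H" "c = H #> (x \<otimes> h)" unfolding Cs_def by auto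
    have "\<one> \<in> J" unfolding J_def using H_one x by (auto intro!: image_eqI[of _ _ "\<one>"])
    then have "h \<in> J #> h" unfolding r_coset_def using h H_mem by force
    then have ex: "(SOME h'. h' \<in> J #> h) \<in> J #> h" by (rule someI)
    then obtain j where j: "j \<in> J" "(SOME h'. h' \<in> J #> h) = j \<otimes> h" unfolding r_coset_def by auto
    then obtain k where k: "k \<in> H" "j = inv x \<otimes> k \<otimes> inv (inv x)" "j \<in> H" unfolding J_def by auto
    have "x \<otimes> (j \<otimes> h) = k \<otimes> (x \<otimes> h)"
      using k x h H_mem by (simp add: m_assoc cancel1)
    then have "g (J #> h) = c" unfolding g_def using j h k rc_left[of k "x \<otimes> h"] H_mem x by simp
    then show "c \<in> g ` ((\<lambda>h. J #> h) ` H)" using h by blast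
  qed
  then show ?thesis using fin finite_subset by blast
qed

lemma N_pos: "x \<in> carrier G \<Longrightarrow> N x > 0"
  unfolding N_def using Cs_finite[of x] H_one unfolding Cs_def by (auto simp: card_gt_0_iff)

lemma Cs_inv: assumes "x \<in> carrier G" "k \<in> H" "h \<in> H"
  shows "Cs (k \<otimes> x \<otimes> h) = Cs x"
proof -
  have "H #> (k \<otimes> x \<otimes> h \<otimes> h') = H #> (x \<otimes> (h \<otimes> h'))" if "h' \<in> H" for h'
    using assms that H_mem rc_left by (simp add: m_assoc)
  moreover have "H #> (x \<otimes> h') = H #> (k \<otimes> x \<otimes> h \<otimes> (inv h \<otimes> h'))" if "h' \<in> H" for h'
    using assms that H_mem rc_left by (simp add: m_assoc cancel1)
  ultimately show ?thesis unfolding Cs_def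
    using assms H_mult H_inv by (auto simp: image_def)
qed

lemma N_inv: "x \<in> carrier G \<Longrightarrow> k \<in> H \<Longrightarrow> h \<in> H \<Longrightarrow> N (k \<otimes> x \<otimes> h) = N x"
  unfolding N_def using Cs_inv by simp

definition P :: "'a \<Rightarrow> 'a \<Rightarrow> 'a set set" where
  "P x y = (\<lambda>(h,h'). H #> (x \<otimes> h \<otimes> y \<otimes> h')) ` (H \<times> H)"

lemma P_sub: assumes x: "x \<in> carrier G" and y: "y \<in> carrier G"
  shows "P x y \<subseteq> (\<Union>C\<in>Cs y. (\<lambda>c. c #> rep C) ` Cs x)"
proof
  fix c assume "c \<in> P x y"
  then obtain h h' where hh: "h \<in> H" "h' \<in> H" "c = H #> (x \<otimes> h \<otimes> y \<otimes> h')" unfolding P_def by auto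
  define C where "C = H #> (y \<otimes> h')"
  have C: "C \<in> Cs y" unfolding C_def Cs_def using hh by auto
  obtain k where k: "k \<in> H" "rep C = k \<otimes> (y \<otimes> h')" unfolding C_def using rep_obtain[of "y \<otimes> h'"] y hh H_mem by auto
  have "x \<otimes> h \<otimes> y \<otimes> h' = (x \<otimes> (h \<otimes> inv k)) \<otimes> rep C"
    using k hh x y H_mem by (simp add: m_assoc cancel2)
  then have "c = (H #> (x \<otimes> (h \<otimes> inv k))) #> rep C"
    using hh rc_mult k x y H_mem H_inv by (simp add: rep_carr[of "y \<otimes> h'", folded C_def])
  moreover have "H #> (x \<otimes> (h \<otimes> inv k)) \<in> Cs x" unfolding Cs_def using hh k H_mult H_inv by auto
  ultimately show "c \<in> (\<Union>C\<in>Cs y. (\<lambda>c. c #> rep C) ` Cs x)" using C by blast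
qed

lemma P_finite: "x \<in> carrier G \<Longrightarrow> y \<in> carrier G \<Longrightarrow> finite (P x y)"
  using P_sub Cs_finite by (meson finite_UN_I finite_imageI finite_subset)

lemma P_card: assumes x: "x \<in> carrier G" and y: "y \<in> carrier G" shows "card (P x y) \<le> N x * N y"
proof -
  have "card (P x y) \<le> card (\<Union>C\<in>Cs y. (\<lambda>c. c #> rep C) ` Cs x)"
    using P_sub[OF x y] Cs_finite x y by (intro card_mono) auto
  also have "\<dots> \<le> (\<Sum>C\<in>Cs y. card ((\<lambda>c. c #> rep C) ` Cs x))" by (rule card_UN_le) (use Cs_finite y in auto)
  also have "\<dots> \<le> (\<Sum>C\<in>Cs y. N x)" unfolding N_def by (intro sum_mono card_image_le Cs_finite x)
  also have "\<dots> = N x * N y" unfolding N_def by simp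
  finally show ?thesis .
qed

lemma rc_in: "x \<in> carrier G \<Longrightarrow> y \<in> H #> x \<Longrightarrow> y \<in> carrier G"
  using rc_carr by blast

context fixes K assumes K: "subgroup K G" and HK: "H \<subseteq> K"
begin

lemma K_mem: "x \<in> K \<Longrightarrow> x \<in> carrier G" using subgroup.subset[OF K] by auto
lemma K_mult: "x \<in> K \<Longrightarrow> y \<in> K \<Longrightarrow> x \<otimes> y \<in> K" by (rule subgroup.m_closed[OF K])
lemma K_inv: "x \<in> K \<Longrightarrow> inv x \<in> K" by (rule subgroup.m_inv_closed[OF K])

lemma cs_mem: "c \<in> coset_space G K H \<longleftrightarrow> (\<exists>x\<in>K. c = H #> x)"
  unfolding coset_space_def by auto

lemma cs_I: "x \<in> K \<Longrightarrow> H #> x \<in> coset_space G K H"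
  unfolding coset_space_def by auto

lemma rep_K: assumes "c \<in> coset_space G K H" shows "rep c \<in> K" "rep c \<in> carrier G" "H #> rep c = c"
proof -
  obtain x where x: "x \<in> K" "c = H #> x" using assms cs_mem by auto
  obtain h where h: "h \<in> H" "rep c = h \<otimes> x" using rep_obtain[of x] x K_mem by auto
  show "rep c \<in> K" using h x HK K_mult by auto
  then show "rep c \<in> carrier G" by (rule K_mem)
  show "H #> rep c = c" using x rc_rep K_mem by auto
qed

lemma cs_rcD: assumes "x \<in> carrier G" "H #> x \<in> coset_space G K H" shows "x \<in> K"
proof -
  obtain y where y: "y \<in> K" "H #> x = H #> y" using assms cs_mem by auto
  then have "x \<otimes> inv y \<in> H" using rc_eq_iff assms K_mem by auto
  then have "(x \<otimes> inv y) \<otimes> y \<in> K" using HK y K_mult by auto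
  then show ?thesis using assms y K_mem by (simp add: m_assoc)
qed

lemma HA_zero: "f \<in> hecke_algebra G K H \<Longrightarrow> c \<notin> coset_space G K H \<Longrightarrow> f c = 0"
  unfolding hecke_algebra_def by auto
lemma HA_fin: "f \<in> hecke_algebra G K H \<Longrightarrow> finite {c. f c \<noteq> 0}"
  unfolding hecke_algebra_def by auto
lemma HA_supp: "f \<in> hecke_algebra G K H \<Longrightarrow> {c. f c \<noteq> 0} \<subseteq> coset_space G K H"
  unfolding hecke_algebra_def by auto

lemma HA_inv: assumes f: "f \<in> hecke_algebra G K H" and a: "a \<in> K" and hk: "k \<in> H" "h \<in> H"
  shows "f (H #> (k \<otimes> a \<otimes> h)) = f (H #> a)"
proof -
  have "H #> (k \<otimes> a \<otimes> h) = H #> (a \<otimes> h)" using rc_left[of k "a \<otimes> h"] hk a K_mem H_mem by (simp add: m_assoc)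
  also have "f \<dots> = f (H #> a)" using f a hk unfolding hecke_algebra_def by auto
  finally show ?thesis by simp
qed

lemma kern: assumes f: "f \<in> hecke_algebra G K H" and x: "x \<in> K" and y: "y \<in> K"
  shows "f (H #> (rep (H #> x) \<otimes> inv (rep (H #> y)))) = f (H #> (x \<otimes> inv y))"
proof -
  obtain k where k: "k \<in> H" "rep (H #> x) = k \<otimes> x" using rep_obtain[of x] x K_mem by auto
  obtain k' where k': "k' \<in> H" "rep (H #> y) = k' \<otimes> y" using rep_obtain[of y] y K_mem by auto
  have "rep (H #> x) \<otimes> inv (rep (H #> y)) = k \<otimes> (x \<otimes> inv y) \<otimes> inv k'"
    using k k' x y K_mem H_mem by (simp add: m_assoc inv_mult_group)
  then show ?thesis using HA_inv[OF f, of "x \<otimes> inv y" k "inv k'"] k k' x y K_mult K_inv H_inv by simp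
qed

lemma row_fin: assumes f: "f \<in> hecke_algebra G K H" and x: "x \<in> carrier G"
  shows "finite {d \<in> coset_space G K H. f (H #> (x \<otimes> inv (rep d))) \<noteq> 0}"
proof -
  have "{d \<in> coset_space G K H. f (H #> (x \<otimes> inv (rep d))) \<noteq> 0}
     \<subseteq> (\<Union>e\<in>{c. f c \<noteq> 0}. (\<lambda>c. c #> x) ` Cs (inv (rep e)))"
  proof safe
    fix d assume d: "d \<in> coset_space G K H" and nz: "f (H #> (x \<otimes> inv (rep d))) \<noteq> 0"
    define e where "e = H #> (x \<otimes> inv (rep d))"
    have rd: "rep d \<in> carrier G" "H #> rep d = d" using rep_K d by auto
    have ecs: "e \<in> coset_space G K H" using nz HA_supp[OF f] e_def by auto
    have "x \<otimes> inv (rep d) \<in> carrier G" using x rd by simp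
    then obtain k where k: "k \<in> H" "rep e = k \<otimes> (x \<otimes> inv (rep d))" unfolding e_def by (rule rep_obtain)
    have "inv (rep e) \<otimes> k \<otimes> x = rep d"
      using k x rd H_mem by (simp add: m_assoc inv_mult_group cancel2)
    then have "d = (H #> (inv (rep e) \<otimes> k)) #> x"
      using rc_mult[of "inv (rep e) \<otimes> k" x] rd k x H_mem rep_K(2)[OF ecs] by simp
    moreover have "H #> (inv (rep e) \<otimes> k) \<in> Cs (inv (rep e))" unfolding Cs_def using k by auto
    ultimately show "d \<in> (\<Union>e\<in>{c. f c \<noteq> 0}. (\<lambda>c. c #> x) ` Cs (inv (rep e)))"
      using nz e_def by (intro UN_I[of e]) auto
  qed
  moreover have "finite (\<Union>e\<in>{c. f c \<noteq> 0}. (\<lambda>c. c #> x) ` Cs (inv (rep e)))"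
    using HA_fin[OF f] HA_supp[OF f] rep_K Cs_finite by (intro finite_UN_I finite_imageI) auto
  ultimately show ?thesis by (rule finite_subset)
qed

lemma col_fin: assumes f: "f \<in> hecke_algebra G K H" and y: "y \<in> carrier G"
  shows "finite {c \<in> coset_space G K H. f (H #> (rep c \<otimes> y)) \<noteq> 0}"
proof -
  have "{c \<in> coset_space G K H. f (H #> (rep c \<otimes> y)) \<noteq> 0}
     \<subseteq> (\<lambda>e. H #> (rep e \<otimes> inv y)) ` {c. f c \<noteq> 0}"
  proof safe
    fix c assume c: "c \<in> coset_space G K H" and nz: "f (H #> (rep c \<otimes> y)) \<noteq> 0"
    define e where "e = H #> (rep c \<otimes> y)"
    have rc: "rep c \<in> carrier G" "H #> rep c = c" using rep_K c by auto
    have "rep c \<otimes> y \<in> carrier G" using y rc by simp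
    then obtain k where k: "k \<in> H" "rep e = k \<otimes> (rep c \<otimes> y)" unfolding e_def by (rule rep_obtain)
    have "rep e \<otimes> inv y = k \<otimes> rep c" using k y rc H_mem by (simp add: m_assoc)
    then have "H #> (rep e \<otimes> inv y) = c" using rc_left[of k "rep c"] k rc by simp
    then show "c \<in> (\<lambda>e. H #> (rep e \<otimes> inv y)) ` {c. f c \<noteq> 0}"
      using nz e_def by (intro image_eqI[of _ _ e]) auto
  qed
  then show ?thesis by (rule finite_subset[OF _ finite_imageI[OF HA_fin[OF f]]])
qed

end


context fixes K assumes K: "subgroup K G" and HK: "H \<subseteq> K"
begin

abbreviation "SK \<equiv> coset_space G K H"
abbreviation "SG \<equiv> coset_space G (carrier G) H"

lemma SK_sub: "SK \<subseteq> SG"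
  unfolding coset_space_def using K_mem[OF K HK] by auto

lemma HA_sub: assumes f: "f \<in> hecke_algebra G K H" shows "f \<in> hecke_algebra G (carrier G) H"
proof -
  have "f (H #> (x \<otimes> h)) = f (H #> x)" if x: "x \<in> carrier G" and h: "h \<in> H" for x h
  proof (cases "x \<in> K")
    case True then show ?thesis using f h unfolding hecke_algebra_def by auto
  next
    case False
    have "x \<otimes> h \<notin> K"
    proof
      assume "x \<otimes> h \<in> K"
      then have "(x \<otimes> h) \<otimes> inv h \<in> K" using h HK K_mult[OF K HK] K_inv[OF K HK] by auto
      then show False using False x h H_mem by (simp add: m_assoc)
    qed
    then have "H #> (x \<otimes> h) \<notin> SK" using cs_rcD[OF K HK] x h H_mem by auto
    moreover have "H #> x \<notin> SK" using cs_rcD[OF K HK] x False by auto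
    ultimately show ?thesis using HA_zero[OF K HK f] by simp
  qed
  then show ?thesis using f SK_sub unfolding hecke_algebra_def by auto
qed

lemma len_restrict: assumes "length_function G (carrier G) H l" shows "length_function G K H l"
proof -
  have k: "\<And>x. x \<in> K \<Longrightarrow> x \<in> carrier G" using K_mem[OF K HK] .
  show ?thesis using assms unfolding length_function_def by (meson k)
qed

lemma dir1: assumes "property_RD G (carrier G) H" shows "property_RD G K H"
proof -
  obtain l s C where l: "length_function G (carrier G) H l" and s: "s > 0" and C: "C > 0"
    and RD: "\<And>f xi. f \<in> hecke_algebra G (carrier G) H \<Longrightarrow> in_l2 SG xi \<Longrightarrow>
        l2_norm SG (hconv G (carrier G) H f xi)
          \<le> C * sqrt (\<Sum>\<^sub>\<infinity>c\<in>SG. (cmod (f c))\<^sup>2 * (1 + l (rep c)) powr (2 * s)) * l2_norm SG xi"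
    using assms unfolding property_RD_def by blast
  have "l2_norm SK (hconv G K H f xi)
          \<le> C * sqrt (\<Sum>\<^sub>\<infinity>c\<in>SK. (cmod (f c))\<^sup>2 * (1 + l (rep c)) powr (2 * s)) * l2_norm SK xi"
    if f: "f \<in> hecke_algebra G K H" and xi: "in_l2 SK xi" for f xi
  proof -
    define xi' where "xi' c = (if c \<in> SK then xi c else 0)" for c
    have eq_out: "\<And>c. c \<in> SG - SK \<Longrightarrow> xi' c = 0" unfolding xi'_def by auto
    have "(\<lambda>c. (cmod (xi' c))\<^sup>2) summable_on SG \<longleftrightarrow> (\<lambda>c. (cmod (xi c))\<^sup>2) summable_on SK"
      by (rule summable_on_cong_neutral) (use SK_sub in \<open>auto simp: xi'_def\<close>)
    then have l2': "in_l2 SG xi'" using xi unfolding in_l2_def by simp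
    have nxi: "l2_norm SG xi' = l2_norm SK xi" unfolding l2_norm_def
      by (rule arg_cong[where f=sqrt], rule infsum_cong_neutral) (use SK_sub in \<open>auto simp: xi'_def\<close>)
    have hc1: "hconv G (carrier G) H f xi' c = hconv G K H f xi c" if c: "c \<in> SK" for c
      unfolding hconv_def by (rule infsum_cong_neutral) (use SK_sub in \<open>auto simp: xi'_def\<close>)
    have hc2: "hconv G (carrier G) H f xi' c = 0" if c: "c \<in> SG - SK" for c
    proof -
      have rc: "rep c \<in> carrier G" "H #> rep c = c" using rep_K[OF subgroup_self H_carr] c by auto
      have "rep c \<notin> K" using c rc by (metis DiffE cs_I[OF K HK])
      have z: "f (H #> (rep c \<otimes> inv (rep d))) * xi' d = 0" if d: "d \<in> SG" for d
      proof (cases "d \<in> SK")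
        case True
        have rd: "rep d \<in> K" using rep_K[OF K HK True] by auto
        have "rep c \<otimes> inv (rep d) \<notin> K"
        proof
          assume "rep c \<otimes> inv (rep d) \<in> K"
          then have "(rep c \<otimes> inv (rep d)) \<otimes> rep d \<in> K" using rd K_mult[OF K HK] by auto
          then show False using \<open>rep c \<notin> K\<close> rc rd K_mem[OF K HK] by (simp add: m_assoc)
        qed
        then have "H #> (rep c \<otimes> inv (rep d)) \<notin> SK" using cs_rcD[OF K HK] rc rd K_mem[OF K HK] by auto
        then show ?thesis using HA_zero[OF K HK f] by simp
      next
        case False then show ?thesis using d eq_out by simp
      qed
      show ?thesis unfolding hconv_def by (rule infsum_0) (rule z)
    qed
    have nconv: "l2_norm SG (hconv G (carrier G) H f xi') = l2_norm SK (hconv G K H f xi)" unfolding l2_norm_def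
      by (rule arg_cong[where f=sqrt], rule infsum_cong_neutral) (use SK_sub hc1 hc2 in auto)
    have nf: "(\<Sum>\<^sub>\<infinity>c\<in>SG. (cmod (f c))\<^sup>2 * (1 + l (rep c)) powr (2 * s)) = (\<Sum>\<^sub>\<infinity>c\<in>SK. (cmod (f c))\<^sup>2 * (1 + l (rep c)) powr (2 * s))"
      by (rule infsum_cong_neutral) (use SK_sub HA_zero[OF K HK f] in auto)
    show ?thesis using RD[OF HA_sub[OF f] l2'] nxi nconv nf by simp
  qed
  then show ?thesis unfolding property_RD_def using len_restrict[OF l] s C by blast
qed

end

context fixes K l assumes K: "subgroup K G" and HK: "H \<subseteq> K" and len: "length_function G K H l"
begin

lemma l_nonneg: "x \<in> K \<Longrightarrow> 0 \<le> l x" using len unfolding length_function_def by auto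
lemma l_inv: "x \<in> K \<Longrightarrow> l (inv x) = l x" using len unfolding length_function_def by metis
lemma l_sub: "x \<in> K \<Longrightarrow> y \<in> K \<Longrightarrow> l (x \<otimes> y) \<le> l x + l y" using len unfolding length_function_def by metis
lemma l_H: "h \<in> H \<Longrightarrow> l h = 0" using len unfolding length_function_def by metis

lemma hbound: assumes t: "t \<in> carrier G" and t': "t' \<in> carrier G"
  shows "\<exists>b. \<forall>h\<in>H. t \<otimes> h \<otimes> inv t' \<in> K \<longrightarrow> l (t \<otimes> h \<otimes> inv t') \<le> b"
proof -
  define J where "J = H \<inter> (\<lambda>k. inv t \<otimes> k \<otimes> inv (inv t)) ` H"
  define Q where "Q = (\<lambda>h. J #> h) ` H"
  have finQ: "finite Q" unfolding Q_def J_def using heck[of "inv t"] t by simp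
  define m where "m C = (SOME y. y \<in> C)" for C :: "'a set"
  define b where "b = Max (insert 0 ((\<lambda>C. l (t \<otimes> m C \<otimes> inv t')) ` {C\<in>Q. t \<otimes> m C \<otimes> inv t' \<in> K}))"
  have "l (t \<otimes> h \<otimes> inv t') \<le> b" if h: "h \<in> H" and hK: "t \<otimes> h \<otimes> inv t' \<in> K" for h
  proof -
    have "\<one> \<in> J" unfolding J_def using H_one t by (auto intro!: image_eqI[of _ _ "\<one>"])
    then have "h \<in> J #> h" unfolding r_coset_def using h H_mem by force
    then have "m (J #> h) \<in> J #> h" unfolding m_def by (rule someI)
    then obtain j where j: "j \<in> J" "m (J #> h) = j \<otimes> h" unfolding r_coset_def by auto
    then obtain k where k: "k \<in> H" "j = inv t \<otimes> k \<otimes> inv (inv t)" unfolding J_def by auto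
    have eq: "t \<otimes> m (J #> h) \<otimes> inv t' = k \<otimes> (t \<otimes> h \<otimes> inv t')"
      using j k t t' h H_mem by (simp add: m_assoc cancel1)
    have inK: "t \<otimes> m (J #> h) \<otimes> inv t' \<in> K" unfolding eq using k HK hK K_mult[OF K HK] by auto
    have C: "J #> h \<in> Q" unfolding Q_def using h by auto
    have "t \<otimes> h \<otimes> inv t' = inv k \<otimes> (t \<otimes> m (J #> h) \<otimes> inv t')"
      unfolding eq using k t t' h H_mem by (simp add: cancel2)
    then have "l (t \<otimes> h \<otimes> inv t') \<le> l (inv k) + l (t \<otimes> m (J #> h) \<otimes> inv t')"
      using l_sub[of "inv k" "t \<otimes> m (J #> h) \<otimes> inv t'"] inK k HK H_inv by auto
    also have "\<dots> = l (t \<otimes> m (J #> h) \<otimes> inv t')" using l_H[of "inv k"] k H_inv by simp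
    also have "\<dots> \<le> b" unfolding b_def using C inK finQ by (intro Max_ge) auto
    finally show ?thesis .
  qed
  then show ?thesis by blast
qed

end

definition L0 :: "'a set \<Rightarrow> ('a \<Rightarrow> real) \<Rightarrow> 'a set \<Rightarrow> 'a \<Rightarrow> real" where
  "L0 K l R x = Max ((\<lambda>(t,t'). l (t \<otimes> x \<otimes> inv t')) ` {(t,t'). t \<in> R \<and> t' \<in> R \<and> t \<otimes> x \<otimes> inv t' \<in> K})"

context fixes K l R assumes K: "subgroup K G" and HK: "H \<subseteq> K" and len: "length_function G K H l"
  and finR: "finite R" and RG: "R \<subseteq> carrier G" and R1: "\<one> \<in> R"
  and cover: "\<And>x. x \<in> carrier G \<Longrightarrow> \<exists>r\<in>R. x \<otimes> inv r \<in> K"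
begin

lemma R_mem: "r \<in> R \<Longrightarrow> r \<in> carrier G" using RG by auto

lemma L0_set: assumes x: "x \<in> carrier G"
  shows "finite ((\<lambda>(t,t'). l (t \<otimes> x \<otimes> inv t')) ` {(t,t'). t \<in> R \<and> t' \<in> R \<and> t \<otimes> x \<otimes> inv t' \<in> K})"
    and "(\<lambda>(t,t'). l (t \<otimes> x \<otimes> inv t')) ` {(t,t'). t \<in> R \<and> t' \<in> R \<and> t \<otimes> x \<otimes> inv t' \<in> K} \<noteq> {}"
proof -
  have "{(t,t'). t \<in> R \<and> t' \<in> R \<and> t \<otimes> x \<otimes> inv t' \<in> K} \<subseteq> R \<times> R" by auto
  then show "finite ((\<lambda>(t,t'). l (t \<otimes> x \<otimes> inv t')) ` {(t,t'). t \<in> R \<and> t' \<in> R \<and> t \<otimes> x \<otimes> inv t' \<in> K})"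
    using finR by (meson finite_SigmaI finite_imageI finite_subset)
  obtain r where r: "r \<in> R" "x \<otimes> inv r \<in> K" using cover x by auto
  then have "(\<one>, r) \<in> {(t,t'). t \<in> R \<and> t' \<in> R \<and> t \<otimes> x \<otimes> inv t' \<in> K}" using R1 x by simp
  then show "(\<lambda>(t,t'). l (t \<otimes> x \<otimes> inv t')) ` {(t,t'). t \<in> R \<and> t' \<in> R \<and> t \<otimes> x \<otimes> inv t' \<in> K} \<noteq> {}" by blast
qed

lemma L0_ge: assumes x: "x \<in> carrier G" and t: "t \<in> R" "t' \<in> R" "t \<otimes> x \<otimes> inv t' \<in> K"
  shows "l (t \<otimes> x \<otimes> inv t') \<le> L0 K l R x"
  unfolding L0_def using L0_set[OF x] t by (intro Max_ge) auto

lemma L0_le: assumes x: "x \<in> carrier G" and b: "\<And>t t'. t \<in> R \<Longrightarrow> t' \<in> R \<Longrightarrow> t \<otimes> x \<otimes> inv t' \<in> K \<Longrightarrow> l (t \<otimes> x \<otimes> inv t') \<le> B"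
  shows "L0 K l R x \<le> B"
  unfolding L0_def using L0_set[OF x] b by (subst Max_le_iff) auto

lemma L0_K: "x \<in> K \<Longrightarrow> l x \<le> L0 K l R x"
  using L0_ge[of x \<one> \<one>] R1 K_mem[OF K HK] by simp

lemma L0_nonneg: assumes x: "x \<in> carrier G" shows "0 \<le> L0 K l R x"
proof -
  obtain r where r: "r \<in> R" "x \<otimes> inv r \<in> K" using cover x by auto
  then have "l (\<one> \<otimes> x \<otimes> inv r) \<le> L0 K l R x" using L0_ge[OF x R1 r(1)] x by simp
  moreover have "0 \<le> l (\<one> \<otimes> x \<otimes> inv r)" using l_nonneg[OF K HK len] r x by simp
  ultimately show ?thesis by linarith
qed

lemma L0_sub: assumes x: "x \<in> carrier G" and y: "y \<in> carrier G"
  shows "L0 K l R (x \<otimes> y) \<le> L0 K l R x + L0 K l R y"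
proof (rule L0_le)
  show "x \<otimes> y \<in> carrier G" using x y by simp
  fix t t'' assume t: "t \<in> R" and t'': "t'' \<in> R" and inK: "t \<otimes> (x \<otimes> y) \<otimes> inv t'' \<in> K"
  obtain t' where t': "t' \<in> R" "(t \<otimes> x) \<otimes> inv t' \<in> K" using cover[of "t \<otimes> x"] x t R_mem by auto
  have eq: "t' \<otimes> y \<otimes> inv t'' = inv (t \<otimes> x \<otimes> inv t') \<otimes> (t \<otimes> (x \<otimes> y) \<otimes> inv t'')"
    using t t' t'' x y R_mem by (simp add: m_assoc inv_mult_group cancel2)
  have K2: "t' \<otimes> y \<otimes> inv t'' \<in> K" unfolding eq using t'(2) inK K_mult[OF K HK] K_inv[OF K HK] by auto
  have eq2: "t \<otimes> (x \<otimes> y) \<otimes> inv t'' = (t \<otimes> x \<otimes> inv t') \<otimes> (t' \<otimes> y \<otimes> inv t'')"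
    using t t' t'' x y R_mem by (simp add: m_assoc cancel2)
  have "l (t \<otimes> (x \<otimes> y) \<otimes> inv t'') \<le> l (t \<otimes> x \<otimes> inv t') + l (t' \<otimes> y \<otimes> inv t'')"
    unfolding eq2 by (rule l_sub[OF K HK len t'(2) K2])
  also have "\<dots> \<le> L0 K l R x + L0 K l R y"
    using L0_ge[OF x t t'(1) t'(2)] L0_ge[OF y t'(1) t'' K2] by linarith
  finally show "l (t \<otimes> (x \<otimes> y) \<otimes> inv t'') \<le> L0 K l R x + L0 K l R y" .
qed

lemma L0_inv_le: assumes x: "x \<in> carrier G" shows "L0 K l R (inv x) \<le> L0 K l R x"
proof (rule L0_le)
  show "inv x \<in> carrier G" using x by simp
  fix t t' assume t: "t \<in> R" "t' \<in> R" and inK: "t \<otimes> inv x \<otimes> inv t' \<in> K"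
  have eq: "t \<otimes> inv x \<otimes> inv t' = inv (t' \<otimes> x \<otimes> inv t)"
    using t x R_mem by (simp add: m_assoc inv_mult_group)
  have K2: "t' \<otimes> x \<otimes> inv t \<in> K"
  proof -
    have "inv (inv (t' \<otimes> x \<otimes> inv t)) \<in> K" using inK unfolding eq by (rule K_inv[OF K HK])
    then show ?thesis using t x R_mem by simp
  qed
  have "l (t \<otimes> inv x \<otimes> inv t') = l (t' \<otimes> x \<otimes> inv t)" unfolding eq by (rule l_inv[OF K HK len K2])
  also have "\<dots> \<le> L0 K l R x" using L0_ge[OF x t(2) t(1) K2] .
  finally show "l (t \<otimes> inv x \<otimes> inv t') \<le> L0 K l R x" .
qed

lemma L0_inv: "x \<in> carrier G \<Longrightarrow> L0 K l R (inv x) = L0 K l R x"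
  using L0_inv_le[of x] L0_inv_le[of "inv x"] by simp

lemma L0_Hbound: "\<exists>B\<ge>0. \<forall>h\<in>H. L0 K l R h \<le> B"
proof -
  have "\<forall>p\<in>R\<times>R. \<exists>b. \<forall>h\<in>H. fst p \<otimes> h \<otimes> inv (snd p) \<in> K \<longrightarrow> l (fst p \<otimes> h \<otimes> inv (snd p)) \<le> b"
    using hbound[OF K HK len] R_mem by auto
  then obtain b where b: "\<And>p h. p \<in> R\<times>R \<Longrightarrow> h \<in> H \<Longrightarrow> fst p \<otimes> h \<otimes> inv (snd p) \<in> K \<Longrightarrow> l (fst p \<otimes> h \<otimes> inv (snd p)) \<le> b p"
    by metis
  define B where "B = (\<Sum>p\<in>R\<times>R. \<bar>b p\<bar>)"
  have "L0 K l R h \<le> B" if h: "h \<in> H" for h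
  proof (rule L0_le)
    show "h \<in> carrier G" using h H_mem by simp
    fix t t' assume t: "t \<in> R" "t' \<in> R" "t \<otimes> h \<otimes> inv t' \<in> K"
    have "l (t \<otimes> h \<otimes> inv t') \<le> b (t,t')" using b[of "(t,t')" h] t h by simp
    also have "\<dots> \<le> \<bar>b (t,t')\<bar>" by simp
    also have "\<dots> \<le> B" unfolding B_def using t finR by (intro member_le_sum) auto
    finally show "l (t \<otimes> h \<otimes> inv t') \<le> B" .
  qed
  moreover have "B \<ge> 0" unfolding B_def by (simp add: sum_nonneg)
  ultimately show ?thesis by blast
qed

end

definition L1 :: "'a set \<Rightarrow> ('a \<Rightarrow> real) \<Rightarrow> 'a set \<Rightarrow> 'a \<Rightarrow> real" where
  "L1 K l R x = (SUP p\<in>H\<times>H. L0 K l R (fst p \<otimes> x \<otimes> snd p))"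

definition Lx :: "'a set \<Rightarrow> ('a \<Rightarrow> real) \<Rightarrow> 'a set \<Rightarrow> 'a \<Rightarrow> real" where
  "Lx K l R x = (if x \<in> H then 0 else L1 K l R x)"

context fixes K l R assumes K: "subgroup K G" and HK: "H \<subseteq> K" and len: "length_function G K H l"
  and finR: "finite R" and RG: "R \<subseteq> carrier G" and R1: "\<one> \<in> R"
  and cover: "\<And>x. x \<in> carrier G \<Longrightarrow> \<exists>r\<in>R. x \<otimes> inv r \<in> K"
begin

abbreviation "L0' \<equiv> L0 K l R"
abbreviation "L1' \<equiv> L1 K l R"

lemmas L0facts = L0_sub[OF K HK len finR RG R1 cover] L0_inv[OF K HK len finR RG R1 cover]
  L0_nonneg[OF K HK len finR RG R1 cover] L0_K[OF K HK len finR RG R1 cover]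

lemma L1_bdd: assumes x: "x \<in> carrier G" shows "bdd_above ((\<lambda>p. L0' (fst p \<otimes> x \<otimes> snd p)) ` (H\<times>H))"
proof -
  obtain B where B: "B \<ge> 0" "\<And>h. h \<in> H \<Longrightarrow> L0' h \<le> B" using L0_Hbound[OF K HK len finR RG R1 cover] by auto
  have "L0' (fst p \<otimes> x \<otimes> snd p) \<le> L0' x + 2 * B" if p: "p \<in> H \<times> H" for p
  proof -
    have h: "fst p \<in> H" "snd p \<in> H" using p by auto
    have "L0' (fst p \<otimes> x \<otimes> snd p) \<le> L0' (fst p \<otimes> x) + L0' (snd p)"
      using L0facts(1)[of "fst p \<otimes> x" "snd p"] h x H_mem by simp
    also have "\<dots> \<le> L0' (fst p) + L0' x + L0' (snd p)"
      using L0facts(1)[of "fst p" x] h x H_mem by simp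
    also have "\<dots> \<le> L0' x + 2 * B" using B(2)[OF h(1)] B(2)[OF h(2)] by simp
    finally show ?thesis .
  qed
  then show ?thesis by (intro bdd_aboveI2) auto
qed

lemma L1_ge: "x \<in> carrier G \<Longrightarrow> h \<in> H \<Longrightarrow> h' \<in> H \<Longrightarrow> L0' (h \<otimes> x \<otimes> h') \<le> L1' x"
  unfolding L1_def using L1_bdd[of x] by (intro cSUP_upper2[of _ _ "(h,h')"]) auto

lemma L1_le: "(\<And>h h'. h \<in> H \<Longrightarrow> h' \<in> H \<Longrightarrow> L0' (h \<otimes> x \<otimes> h') \<le> B) \<Longrightarrow> L1' x \<le> B"
  unfolding L1_def using H_one by (intro cSUP_least) auto

lemma L0_L1: "x \<in> carrier G \<Longrightarrow> L0' x \<le> L1' x"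
  using L1_ge[of x \<one> \<one>] H_one by simp

lemma L1_nonneg: "x \<in> carrier G \<Longrightarrow> 0 \<le> L1' x"
  using L0_L1 L0facts(3) by (meson order_trans)

lemma L1_left: assumes x: "x \<in> carrier G" and h: "h \<in> H" shows "L1' (h \<otimes> x) \<le> L1' x"
proof (rule L1_le)
  fix h1 h2 assume hh: "h1 \<in> H" "h2 \<in> H"
  have "L0' (h1 \<otimes> (h \<otimes> x) \<otimes> h2) = L0' ((h1 \<otimes> h) \<otimes> x \<otimes> h2)" using hh h x H_mem by (simp add: m_assoc)
  also have "\<dots> \<le> L1' x" using L1_ge[of x "h1 \<otimes> h" h2] hh h x H_mult by simp
  finally show "L0' (h1 \<otimes> (h \<otimes> x) \<otimes> h2) \<le> L1' x" .
qed

lemma L1_right: assumes x: "x \<in> carrier G" and h: "h \<in> H" shows "L1' (x \<otimes> h) \<le> L1' x"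
proof (rule L1_le)
  fix h1 h2 assume hh: "h1 \<in> H" "h2 \<in> H"
  have "L0' (h1 \<otimes> (x \<otimes> h) \<otimes> h2) = L0' (h1 \<otimes> x \<otimes> (h \<otimes> h2))" using hh h x H_mem by (simp add: m_assoc)
  also have "\<dots> \<le> L1' x" using L1_ge[of x h1 "h \<otimes> h2"] hh h x H_mult by simp
  finally show "L0' (h1 \<otimes> (x \<otimes> h) \<otimes> h2) \<le> L1' x" .
qed

lemma L1_sub: assumes x: "x \<in> carrier G" and y: "y \<in> carrier G" shows "L1' (x \<otimes> y) \<le> L1' x + L1' y"
proof (rule L1_le)
  fix h1 h2 assume hh: "h1 \<in> H" "h2 \<in> H"
  have "L0' (h1 \<otimes> (x \<otimes> y) \<otimes> h2) = L0' ((h1 \<otimes> x \<otimes> \<one>) \<otimes> (\<one> \<otimes> y \<otimes> h2))" using hh x y H_mem by (simp add: m_assoc)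
  also have "\<dots> \<le> L0' (h1 \<otimes> x \<otimes> \<one>) + L0' (\<one> \<otimes> y \<otimes> h2)" using L0facts(1) hh x y H_mem by simp
  also have "\<dots> \<le> L1' x + L1' y" using L1_ge[of x h1 \<one>] L1_ge[of y \<one> h2] hh x y H_one by simp
  finally show "L0' (h1 \<otimes> (x \<otimes> y) \<otimes> h2) \<le> L1' x + L1' y" .
qed

lemma L1_inv: assumes x: "x \<in> carrier G" shows "L1' (inv x) \<le> L1' x"
proof (rule L1_le)
  fix h1 h2 assume hh: "h1 \<in> H" "h2 \<in> H"
  have "h1 \<otimes> inv x \<otimes> h2 = inv (inv h2 \<otimes> x \<otimes> inv h1)" using hh x H_mem by (simp add: m_assoc inv_mult_group)
  then have "L0' (h1 \<otimes> inv x \<otimes> h2) = L0' (inv h2 \<otimes> x \<otimes> inv h1)" using L0facts(2) hh x H_mem by simp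
  also have "\<dots> \<le> L1' x" using L1_ge[of x "inv h2" "inv h1"] hh x H_inv by simp
  finally show "L0' (h1 \<otimes> inv x \<otimes> h2) \<le> L1' x" .
qed

lemma Lx_length: "length_function G (carrier G) H (Lx K l R)"
proof -
  have inv_eq: "Lx K l R x = Lx K l R (inv x)" if x: "x \<in> carrier G" for x
  proof -
    have "x \<in> H \<longleftrightarrow> inv x \<in> H" using H_inv x by (metis inv_inv)
    moreover have "L1' (inv x) = L1' x" using L1_inv[OF x] L1_inv[of "inv x"] x by simp
    ultimately show ?thesis unfolding Lx_def by simp
  qed
  have sub: "Lx K l R (x \<otimes> y) \<le> Lx K l R x + Lx K l R y" if x: "x \<in> carrier G" and y: "y \<in> carrier G" for x y
  proof (cases "x \<otimes> y \<in> H")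
    case True then show ?thesis unfolding Lx_def using L1_nonneg x y by simp
  next
    case xy: False
    show ?thesis
    proof (cases "x \<in> H")
      case True
      then have "y \<notin> H" using xy H_mult by auto
      then show ?thesis unfolding Lx_def using xy True L1_left[OF y True] by simp
    next
      case xH: False
      show ?thesis
      proof (cases "y \<in> H")
        case True then show ?thesis unfolding Lx_def using xy xH L1_right[OF x True] by simp
      next
        case False then show ?thesis unfolding Lx_def using xy xH L1_sub[OF x y] by simp
      qed
    qed
  qed
  show ?thesis unfolding length_function_def
    using inv_eq sub H_one by (auto simp: Lx_def L1_nonneg)
qed

lemma Lx_K: assumes x: "x \<in> K" shows "l x \<le> Lx K l R x"
proof (cases "x \<in> H")
  case True then show ?thesis unfolding Lx_def using l_H[OF K HK len] by simp
next
  case False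
  have "l x \<le> L0' x" using L0facts(4) x by simp
  also have "\<dots> \<le> L1' x" using L0_L1 K_mem[OF K HK] x by simp
  finally show ?thesis unfolding Lx_def using False by simp
qed

end

lemma reps_exist: assumes K: "subgroup K G" and fin: "finite ((\<lambda>x. K #> x) ` carrier G)"
  shows "\<exists>R. finite R \<and> R \<subseteq> carrier G \<and> \<one> \<in> R \<and> (\<forall>x\<in>carrier G. \<exists>r\<in>R. x \<otimes> inv r \<in> K)"
proof -
  define R where "R = insert \<one> ((\<lambda>A. SOME y. y \<in> A) ` ((\<lambda>x. K #> x) ` carrier G))"
  have Kc: "K \<subseteq> carrier G" by (rule subgroup.subset[OF K])
  have "(SOME y. y \<in> K #> x) \<in> K #> x" if "x \<in> carrier G" for x
    using rcos_self[OF that K] by (metis someI)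
  then have RG: "R \<subseteq> carrier G" unfolding R_def using r_coset_subset_G[OF Kc] by auto
  have cov: "\<exists>r\<in>R. x \<otimes> inv r \<in> K" if x: "x \<in> carrier G" for x
  proof -
    define r where "r = (SOME y. y \<in> K #> x)"
    have r: "r \<in> K #> x" unfolding r_def using rcos_self[OF x K] by (metis someI)
    have rc: "r \<in> carrier G" using r r_coset_subset_G[OF Kc x] by auto
    have "r \<otimes> inv x \<in> K" using subgroup.rcos_module_imp[OF K is_group x r] .
    then have "inv (r \<otimes> inv x) \<in> K" by (rule subgroup.m_inv_closed[OF K])
    then have "x \<otimes> inv r \<in> K" using rc x by (simp add: inv_mult_group)
    moreover have "r \<in> R" unfolding R_def r_def
      by (rule insertI2, rule image_eqI[of _ _ "K #> x"]) (use x in auto)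
    ultimately show ?thesis by auto
  qed
  have "finite R" unfolding R_def using fin by simp
  moreover have "\<one> \<in> R" unfolding R_def by simp
  ultimately show ?thesis using RG cov by (intro exI[of _ R]) simp
qed

lemma infsum_supp: assumes "finite Z" "Z \<subseteq> A" "\<And>x. x \<in> A - Z \<Longrightarrow> g x = 0"
  shows "infsum g A = sum g Z"
proof -
  have "infsum g A = infsum g Z" by (rule infsum_cong_neutral) (use assms in auto)
  then show ?thesis using assms by simp
qed

lemma infsum_le_bound: fixes a :: "_ \<Rightarrow> real"
  assumes nn: "\<And>x. x \<in> A \<Longrightarrow> 0 \<le> a x" and b: "\<And>F. finite F \<Longrightarrow> F \<subseteq> A \<Longrightarrow> sum a F \<le> B"
  shows "infsum a A \<le> B"
proof -
  have bdd: "bdd_above (sum a ` {F. F \<subseteq> A \<and> finite F})" using b by (intro bdd_aboveI2) auto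
  have "infsum a A = (SUP F\<in>{F. finite F \<and> F\<subseteq>A}. sum a F)"
    by (rule nonneg_bdd_above_infsum) (use nn bdd in auto)
  also have "\<dots> \<le> B" by (rule cSUP_least) (use b in auto)
  finally show ?thesis .
qed

lemma sum_le_infsum: fixes a :: "_ \<Rightarrow> real"
  assumes "a summable_on A" "\<And>x. x \<in> A \<Longrightarrow> 0 \<le> a x" "finite F" "F \<subseteq> A"
  shows "sum a F \<le> infsum a A"
proof -
  have "infsum a F \<le> infsum a A"
    by (rule infsum_mono_neutral) (use assms in auto)
  then show ?thesis using assms by simp
qed

lemma P_inv: assumes x: "x \<in> carrier G" "k \<in> H" "h \<in> H" "y \<in> carrier G"
  shows "P (k \<otimes> x \<otimes> h) y = P x y"
proof (intro Set.set_eqI)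
  fix c
  have e1: "H #> (k \<otimes> x \<otimes> h \<otimes> h1 \<otimes> y \<otimes> h2) = H #> (x \<otimes> (h \<otimes> h1) \<otimes> y \<otimes> h2)" if "h1 \<in> H" "h2 \<in> H" for h1 h2
  proof -
    have "k \<otimes> x \<otimes> h \<otimes> h1 \<otimes> y \<otimes> h2 = k \<otimes> (x \<otimes> (h \<otimes> h1) \<otimes> y \<otimes> h2)"
      using assms that H_mem by (simp add: m_assoc)
    then show ?thesis using rc_left[of k "x \<otimes> (h \<otimes> h1) \<otimes> y \<otimes> h2"] assms that H_mem by simp
  qed
  have e2: "H #> (x \<otimes> h1 \<otimes> y \<otimes> h2) = H #> (k \<otimes> x \<otimes> h \<otimes> (inv h \<otimes> h1) \<otimes> y \<otimes> h2)" if "h1 \<in> H" "h2 \<in> H" for h1 h2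
  proof -
    have "h \<otimes> (inv h \<otimes> h1) = h1" using assms that H_mem by (simp add: cancel1)
    then have "x \<otimes> (h \<otimes> (inv h \<otimes> h1)) \<otimes> y \<otimes> h2 = x \<otimes> h1 \<otimes> y \<otimes> h2" by simp
    then show ?thesis using e1[of "inv h \<otimes> h1" h2] that H_mult H_inv assms by simp
  qed
  show "c \<in> P (k \<otimes> x \<otimes> h) y \<longleftrightarrow> c \<in> P x y"
  proof
    assume "c \<in> P (k \<otimes> x \<otimes> h) y"
    then obtain h1 h2 where "h1 \<in> H" "h2 \<in> H" "c = H #> (k \<otimes> x \<otimes> h \<otimes> h1 \<otimes> y \<otimes> h2)" unfolding P_def by auto
    then show "c \<in> P x y" unfolding P_def using e1 assms H_mult by (auto intro!: image_eqI[of _ _ "(h \<otimes> h1, h2)"])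
  next
    assume "c \<in> P x y"
    then obtain h1 h2 where "h1 \<in> H" "h2 \<in> H" "c = H #> (x \<otimes> h1 \<otimes> y \<otimes> h2)" unfolding P_def by auto
    then show "c \<in> P (k \<otimes> x \<otimes> h) y" unfolding P_def using e2 assms H_mult H_inv
      by (auto intro!: image_eqI[of _ _ "(inv h \<otimes> h1, h2)"])
  qed
qed

lemma P_swap: assumes g: "g \<in> carrier G" and t: "t \<in> carrier G" and c: "c \<in> P g t"
  shows "H #> g \<in> P (rep c) (inv t)"
proof -
  obtain h1 h2 where hh: "h1 \<in> H" "h2 \<in> H" "c = H #> (g \<otimes> h1 \<otimes> t \<otimes> h2)" using c unfolding P_def by auto
  obtain k where k: "k \<in> H" "rep c = k \<otimes> (g \<otimes> h1 \<otimes> t \<otimes> h2)" using rep_obtain[of "g \<otimes> h1 \<otimes> t \<otimes> h2"] hh g t H_mem by auto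
  have "rep c \<otimes> inv h2 \<otimes> inv t \<otimes> inv h1 = k \<otimes> g"
    using k hh g t H_mem by (simp add: m_assoc)
  then have "H #> g = H #> (rep c \<otimes> inv h2 \<otimes> inv t \<otimes> inv h1)" using rc_left k g by simp
  then show ?thesis unfolding P_def using hh H_inv by auto
qed

lemma P_rep: "x \<in> carrier G \<Longrightarrow> y \<in> carrier G \<Longrightarrow> P (rep (H #> x)) y = P x y"
  by (metis rep_obtain P_inv[of x _ \<one> y] H_one H_mem r_one m_closed)

lemma P_right: "x \<in> carrier G \<Longrightarrow> h \<in> H \<Longrightarrow> y \<in> carrier G \<Longrightarrow> P (x \<otimes> h) y = P x y"
  using P_inv[of x \<one> h y] H_one by simp

lemma P_rep_carr: "g \<in> carrier G \<Longrightarrow> t \<in> carrier G \<Longrightarrow> c \<in> P g t \<Longrightarrow> rep c \<in> carrier G"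
  unfolding P_def using rep_carr H_mem by auto

lemma Cs_sub_P: "g \<in> carrier G \<Longrightarrow> t \<in> carrier G \<Longrightarrow> Cs (g \<otimes> t) \<subseteq> P g t"
  unfolding Cs_def P_def using H_one by (force simp: m_assoc intro!: image_eqI[of _ _ "(\<one>, _)"])

definition fp :: "'a set \<Rightarrow> ('a set \<Rightarrow> complex) \<Rightarrow> 'a \<Rightarrow> 'a set \<Rightarrow> complex" where
  "fp K f t c' = (if c' \<in> coset_space G K H
     then complex_of_real (sqrt (\<Sum>c\<in>P (rep c') t. (cmod (f c))\<^sup>2 / real (N (rep c)))) else 0)"

context fixes K f t assumes K: "subgroup K G" and HK: "H \<subseteq> K"
  and f: "f \<in> hecke_algebra G (carrier G) H" and t: "t \<in> carrier G"
begin

lemma fp_HA: "fp K f t \<in> hecke_algebra G K H"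
proof -
  have inv: "fp K f t (H #> (x \<otimes> h)) = fp K f t (H #> x)" if x: "x \<in> K" and h: "h \<in> H" for x h
  proof -
    have xc: "x \<in> carrier G" using x K_mem[OF K HK] by simp
    have "P (rep (H #> (x \<otimes> h))) t = P (rep (H #> x)) t"
      using P_rep[of "x \<otimes> h" t] P_rep[of x t] P_right[of x h t] xc h t H_mem by simp
    moreover have "H #> (x \<otimes> h) \<in> coset_space G K H" "H #> x \<in> coset_space G K H"
      using cs_I[OF K HK] x h HK K_mult[OF K HK] by auto
    ultimately show ?thesis unfolding fp_def by simp
  qed
  have supp: "{c'. fp K f t c' \<noteq> 0} \<subseteq> (\<Union>c\<in>{c. f c \<noteq> 0}. P (rep c) (inv t))"
  proof
    fix c' assume "c' \<in> {c'. fp K f t c' \<noteq> 0}"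
    then have c': "c' \<in> coset_space G K H" and nz: "(\<Sum>c\<in>P (rep c') t. (cmod (f c))\<^sup>2 / real (N (rep c))) \<noteq> 0"
      unfolding fp_def by (auto split: if_splits)
    have rc': "rep c' \<in> carrier G" "H #> rep c' = c'" using rep_K[OF K HK c'] by auto
    obtain c where c: "c \<in> P (rep c') t" "f c \<noteq> 0" using nz by (metis (no_types, lifting) norm_zero power_zero_numeral div_0 sum.neutral)
    have "c' \<in> P (rep c) (inv t)" using P_swap[OF rc'(1) t c(1)] rc' by simp
    then show "c' \<in> (\<Union>c\<in>{c. f c \<noteq> 0}. P (rep c) (inv t))" using c by blast
  qed
  have "finite (\<Union>c\<in>{c. f c \<noteq> 0}. P (rep c) (inv t))"
  proof (rule finite_UN_I)
    show "finite {c. f c \<noteq> 0}" by (rule HA_fin[OF subgroup_self H_carr f])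
    fix c assume "c \<in> {c. f c \<noteq> 0}"
    then have "c \<in> coset_space G (carrier G) H" using HA_supp[OF subgroup_self H_carr f] by auto
    then show "finite (P (rep c) (inv t))" using P_finite rep_K[OF subgroup_self H_carr] t by simp
  qed
  then have "finite {c'. fp K f t c' \<noteq> 0}" using supp finite_subset by auto
  then show ?thesis unfolding hecke_algebra_def using inv by (auto simp: fp_def)
qed

lemma fp_dom: assumes g: "g \<in> K" shows "cmod (f (H #> (g \<otimes> t))) \<le> cmod (fp K f t (H #> g))"
proof -
  have gc: "g \<in> carrier G" using g K_mem[OF K HK] by simp
  define S where "S = (\<Sum>c\<in>P g t. (cmod (f c))\<^sup>2 / real (N (rep c)))"
  have fpv: "fp K f t (H #> g) = complex_of_real (sqrt S)"
    unfolding fp_def S_def using cs_I[OF K HK g] P_rep[OF gc t] by simp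
  have "(\<Sum>c\<in>Cs (g \<otimes> t). (cmod (f c))\<^sup>2 / real (N (rep c))) \<le> S"
    unfolding S_def using Cs_sub_P[OF gc t] P_finite[OF gc t] by (intro sum_mono2) auto
  moreover have "(\<Sum>c\<in>Cs (g \<otimes> t). (cmod (f c))\<^sup>2 / real (N (rep c))) = (cmod (f (H #> (g \<otimes> t))))\<^sup>2"
  proof -
    have "(cmod (f c))\<^sup>2 / real (N (rep c)) = (cmod (f (H #> (g \<otimes> t))))\<^sup>2 / real (N (g \<otimes> t))"
      if c: "c \<in> Cs (g \<otimes> t)" for c
    proof -
      obtain h where h: "h \<in> H" "c = H #> (g \<otimes> t \<otimes> h)" using c unfolding Cs_def by auto
      obtain k where k: "k \<in> H" "rep c = k \<otimes> (g \<otimes> t \<otimes> h)" using rep_obtain[of "g \<otimes> t \<otimes> h"] h gc t H_mem by auto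
      have "f c = f (H #> (g \<otimes> t))" using f h gc t unfolding hecke_algebra_def by auto
      moreover have "N (rep c) = N (g \<otimes> t)" using k N_inv[of "g \<otimes> t" k h] h gc t H_mem[OF k(1)] H_mem[OF h(1)] by (simp add: m_assoc)
      ultimately show ?thesis by simp
    qed
    then have "(\<Sum>c\<in>Cs (g \<otimes> t). (cmod (f c))\<^sup>2 / real (N (rep c)))
        = (\<Sum>c\<in>Cs (g \<otimes> t). (cmod (f (H #> (g \<otimes> t))))\<^sup>2 / real (N (g \<otimes> t)))" by (rule sum.cong[OF refl])
    also have "\<dots> = real (N (g \<otimes> t)) * ((cmod (f (H #> (g \<otimes> t))))\<^sup>2 / real (N (g \<otimes> t)))"
      by (simp add: N_def)
    also have "\<dots> = (cmod (f (H #> (g \<otimes> t))))\<^sup>2" using N_pos[of "g \<otimes> t"] gc t by simp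
    finally show ?thesis .
  qed
  ultimately have le: "(cmod (f (H #> (g \<otimes> t))))\<^sup>2 \<le> S" by simp
  have "S \<ge> 0" unfolding S_def by (intro sum_nonneg) auto
  then have "cmod (fp K f t (H #> g)) = sqrt S" unfolding fpv by simp
  moreover have "cmod (f (H #> (g \<otimes> t))) \<le> sqrt S" using le real_le_rsqrt by simp
  ultimately show ?thesis by simp
qed

end

end

context hk begin

lemma L_gen: assumes LL: "length_function G (carrier G) H L" and x: "x \<in> carrier G" and y: "y \<in> carrier G"
  and hs: "k \<in> H" "h \<in> H" "h' \<in> H"
  shows "L (k \<otimes> x \<otimes> h \<otimes> y \<otimes> h') \<le> L x + L y"
proof -
  have sub: "\<And>a b. a \<in> carrier G \<Longrightarrow> b \<in> carrier G \<Longrightarrow> L (a \<otimes> b) \<le> L a + L b"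
    using LL unfolding length_function_def by metis
  have z: "\<And>a. a \<in> H \<Longrightarrow> L a = 0" using LL unfolding length_function_def by metis
  have c: "k \<in> carrier G" "h \<in> carrier G" "h' \<in> carrier G" using hs H_mem by auto
  have "L (k \<otimes> x \<otimes> h \<otimes> y \<otimes> h') \<le> L (k \<otimes> x \<otimes> h \<otimes> y) + L h'" using sub c x y by simp
  also have "\<dots> \<le> L (k \<otimes> x \<otimes> h) + L y + L h'" using sub[of "k \<otimes> x \<otimes> h" y] c x y by simp
  also have "\<dots> \<le> L (k \<otimes> x) + L h + L y + L h'" using sub[of "k \<otimes> x" h] c x y by simp
  also have "\<dots> \<le> L k + L x + L h + L y + L h'" using sub[of k x] c x y by simp
  also have "\<dots> = L x + L y" using z hs by simp
  finally show ?thesis .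
qed

context fixes K f t assumes K: "subgroup K G" and HK: "H \<subseteq> K"
  and f: "f \<in> hecke_algebra G (carrier G) H" and t: "t \<in> carrier G"
begin

lemma fp_supp: "fp K f t c' \<noteq> 0 \<Longrightarrow> c' \<in> (\<Union>c\<in>{c. f c \<noteq> 0}. P (rep c) (inv t))"
proof -
  assume "fp K f t c' \<noteq> 0"
  then have c': "c' \<in> coset_space G K H" and nz: "(\<Sum>c\<in>P (rep c') t. (cmod (f c))\<^sup>2 / real (N (rep c))) \<noteq> 0"
    unfolding fp_def by (auto split: if_splits)
  have rc': "rep c' \<in> carrier G" "H #> rep c' = c'" using rep_K[OF K HK c'] by auto
  obtain c where c: "c \<in> P (rep c') t" "f c \<noteq> 0" using nz by (metis (no_types, lifting) norm_zero power_zero_numeral div_0 sum.neutral)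
  have "c' \<in> P (rep c) (inv t)" using P_swap[OF rc'(1) t c(1)] rc' by simp
  then show "c' \<in> (\<Union>c\<in>{c. f c \<noteq> 0}. P (rep c) (inv t))" using c by blast
qed

lemma fp_sq: assumes c': "c' \<in> coset_space G K H"
  shows "(cmod (fp K f t c'))\<^sup>2 = (\<Sum>c\<in>{c. f c \<noteq> 0}. if c \<in> P (rep c') t then (cmod (f c))\<^sup>2 / real (N (rep c)) else 0)"
proof -
  have rc': "rep c' \<in> carrier G" using rep_K[OF K HK c'] by auto
  define S where "S = (\<Sum>c\<in>P (rep c') t. (cmod (f c))\<^sup>2 / real (N (rep c)))"
  have S0: "S \<ge> 0" unfolding S_def by (intro sum_nonneg) auto
  have "(cmod (fp K f t c'))\<^sup>2 = S" unfolding fp_def S_def[symmetric] using c' S0 by simp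
  also have "S = (\<Sum>c\<in>P (rep c') t \<inter> {c. f c \<noteq> 0}. (cmod (f c))\<^sup>2 / real (N (rep c)))"
    unfolding S_def by (rule sum.mono_neutral_right) (use P_finite[OF rc' t] in auto)
  also have "\<dots> = (\<Sum>c\<in>{c. f c \<noteq> 0} \<inter> P (rep c') t. (cmod (f c))\<^sup>2 / real (N (rep c)))"
    by (simp add: Int_commute)
  also have "\<dots> = (\<Sum>c\<in>{c. f c \<noteq> 0}. if c \<in> P (rep c') t then (cmod (f c))\<^sup>2 / real (N (rep c)) else 0)"
    by (rule sum.inter_restrict) (rule HA_fin[OF subgroup_self H_carr f])
  finally show ?thesis .
qed

end

context fixes K f t l L s assumes K: "subgroup K G" and HK: "H \<subseteq> K"
  and f: "f \<in> hecke_algebra G (carrier G) H" and t: "t \<in> carrier G"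
  and lL: "\<And>x. x \<in> K \<Longrightarrow> l x \<le> L x" and lnn: "\<And>x. x \<in> K \<Longrightarrow> 0 \<le> l x"
  and LL: "length_function G (carrier G) H L" and s: "(s::real) > 0"
begin

lemma L_nn: "x \<in> carrier G \<Longrightarrow> 0 \<le> L x" using LL unfolding length_function_def by metis

lemma wbound: assumes c: "c \<in> coset_space G (carrier G) H" and c': "c' \<in> coset_space G K H"
  and cP: "c' \<in> P (rep c) (inv t)"
  shows "(1 + l (rep c')) powr (2 * s) \<le> (1 + L (inv t)) powr (2 * s) * (1 + L (rep c)) powr (2 * s)"
proof -
  have rc: "rep c \<in> carrier G" using rep_K[OF subgroup_self H_carr c] by auto
  have rc': "rep c' \<in> K" using rep_K[OF K HK c'] by auto
  obtain h h' where hh: "h \<in> H" "h' \<in> H" "c' = H #> (rep c \<otimes> h \<otimes> inv t \<otimes> h')" using cP unfolding P_def by auto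
  obtain k where k: "k \<in> H" "rep c' = k \<otimes> (rep c \<otimes> h \<otimes> inv t \<otimes> h')"
    using rep_obtain[of "rep c \<otimes> h \<otimes> inv t \<otimes> h'"] hh rc t H_mem by auto
  have "rep c' = k \<otimes> rep c \<otimes> h \<otimes> inv t \<otimes> h'" using k hh rc t H_mem[OF k(1)] H_mem[OF hh(1)] H_mem[OF hh(2)] by (simp add: m_assoc)
  then have "L (rep c') \<le> L (rep c) + L (inv t)" using L_gen[OF LL rc _ k(1) hh(1) hh(2), of "inv t"] t by simp
  then have le: "l (rep c') \<le> L (rep c) + L (inv t)" using lL[OF rc'] by simp
  have p0: "0 \<le> L (inv t) * L (rep c)" using L_nn[of "inv t"] L_nn[OF rc] t by simp
  have pe: "(1 + L (inv t)) * (1 + L (rep c)) = 1 + L (inv t) + L (rep c) + L (inv t) * L (rep c)"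
    by (simp add: algebra_simps)
  have "1 + l (rep c') \<le> (1 + L (inv t)) * (1 + L (rep c))"
    unfolding pe using le p0 by linarith
  then have "(1 + l (rep c')) powr (2 * s) \<le> ((1 + L (inv t)) * (1 + L (rep c))) powr (2 * s)"
    using lnn[OF rc'] s by (intro powr_mono2) auto
  also have "\<dots> = (1 + L (inv t)) powr (2 * s) * (1 + L (rep c)) powr (2 * s)"
    using L_nn[of "inv t"] L_nn[OF rc] t by (simp add: powr_mult)
  finally show ?thesis .
qed

lemma fp_weight:
  "(\<Sum>\<^sub>\<infinity>c'\<in>coset_space G K H. (cmod (fp K f t c'))\<^sup>2 * (1 + l (rep c')) powr (2 * s))
   \<le> real (N (inv t)) * (1 + L (inv t)) powr (2 * s) * (\<Sum>\<^sub>\<infinity>c\<in>coset_space G (carrier G) H. (cmod (f c))\<^sup>2 * (1 + L (rep c)) powr (2 * s))"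
proof -
  define Z where "Z = {c. f c \<noteq> 0}"
  define Y where "Y = (\<Union>c\<in>Z. P (rep c) (inv t)) \<inter> coset_space G K H"
  define A where "A c = (cmod (f c))\<^sup>2 / real (N (rep c))" for c
  define Wl where "Wl c' = (1 + l (rep c')) powr (2 * s)" for c'
  define WL where "WL c = (1 + L (rep c)) powr (2 * s)" for c
  define M where "M = (1 + L (inv t)) powr (2 * s)"
  have finZ: "finite Z" unfolding Z_def by (rule HA_fin[OF subgroup_self H_carr f])
  have ZS: "Z \<subseteq> coset_space G (carrier G) H" unfolding Z_def using HA_supp[OF subgroup_self H_carr f] .
  have repZ: "c \<in> Z \<Longrightarrow> rep c \<in> carrier G" for c using ZS rep_K[OF subgroup_self H_carr] by auto
  have finY: "finite Y" unfolding Y_def using finZ P_finite repZ t by auto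
  have A0: "A c \<ge> 0" for c unfolding A_def by simp
  have Wl0: "Wl c \<ge> 0" for c unfolding Wl_def by simp
  have "(\<Sum>\<^sub>\<infinity>c'\<in>coset_space G K H. (cmod (fp K f t c'))\<^sup>2 * Wl c') = (\<Sum>c'\<in>Y. (cmod (fp K f t c'))\<^sup>2 * Wl c')"
    by (rule infsum_supp[OF finY]) (use fp_supp[OF K HK f t] in \<open>auto simp: Y_def Z_def\<close>)
  also have "\<dots> = (\<Sum>c'\<in>Y. \<Sum>c\<in>Z. (if c \<in> P (rep c') t then A c else 0) * Wl c')"
    using fp_sq[OF K HK f t] unfolding Y_def Z_def A_def by (auto intro!: sum.cong simp: sum_distrib_right)
  also have "\<dots> = (\<Sum>c\<in>Z. \<Sum>c'\<in>Y. (if c \<in> P (rep c') t then A c else 0) * Wl c')" by (rule sum.swap)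
  also have "\<dots> \<le> (\<Sum>c\<in>Z. (cmod (f c))\<^sup>2 * (real (N (inv t)) * M * WL c))"
  proof (rule sum_mono)
    fix c assume cZ: "c \<in> Z"
    have rc: "rep c \<in> carrier G" using repZ[OF cZ] .
    have "(\<Sum>c'\<in>Y. (if c \<in> P (rep c') t then A c else 0) * Wl c')
        \<le> (\<Sum>c'\<in>Y. if c' \<in> P (rep c) (inv t) then A c * (M * WL c) else 0)"
    proof (rule sum_mono)
      fix c' assume c'Y: "c' \<in> Y"
      then have c'K: "c' \<in> coset_space G K H" unfolding Y_def by auto
      have rc': "rep c' \<in> carrier G" "H #> rep c' = c'" using rep_K[OF K HK c'K] by auto
      show "(if c \<in> P (rep c') t then A c else 0) * Wl c' \<le> (if c' \<in> P (rep c) (inv t) then A c * (M * WL c) else 0)"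
      proof (cases "c \<in> P (rep c') t")
        case True
        then have cP: "c' \<in> P (rep c) (inv t)" using P_swap[OF rc'(1) t True] rc' by simp
        have "Wl c' \<le> M * WL c" unfolding Wl_def M_def WL_def using wbound[OF ZS[THEN subsetD, OF cZ] c'K cP] .
        then show ?thesis using True cP A0[of c] by (simp add: mult_left_mono)
      next
        case False then show ?thesis using A0[of c] Wl0 unfolding M_def WL_def by simp
      qed
    qed
    also have "\<dots> = (\<Sum>c'\<in>Y \<inter> P (rep c) (inv t). A c * (M * WL c))"
      by (rule sum.inter_restrict[symmetric]) (rule finY)
    also have "\<dots> = real (card (Y \<inter> P (rep c) (inv t))) * (A c * (M * WL c))" by simp
    also have "\<dots> \<le> real (N (rep c) * N (inv t)) * (A c * (M * WL c))"
    proof (rule mult_right_mono)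
      have "card (Y \<inter> P (rep c) (inv t)) \<le> card (P (rep c) (inv t))"
        using P_finite[OF rc] t by (intro card_mono) auto
      also have "\<dots> \<le> N (rep c) * N (inv t)" using P_card[OF rc] t by simp
      finally show "real (card (Y \<inter> P (rep c) (inv t))) \<le> real (N (rep c) * N (inv t))" by linarith
      show "0 \<le> A c * (M * WL c)" using A0 unfolding M_def WL_def by simp
    qed
    also have "\<dots> = (cmod (f c))\<^sup>2 * (real (N (inv t)) * M * WL c)"
      unfolding A_def using N_pos[OF rc] by (simp add: field_simps)
    finally show "(\<Sum>c'\<in>Y. (if c \<in> P (rep c') t then A c else 0) * Wl c') \<le> (cmod (f c))\<^sup>2 * (real (N (inv t)) * M * WL c)" .
  qed
  also have "\<dots> = real (N (inv t)) * M * (\<Sum>c\<in>Z. (cmod (f c))\<^sup>2 * WL c)"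
    by (simp add: sum_distrib_left mult_ac)
  also have "(\<Sum>c\<in>Z. (cmod (f c))\<^sup>2 * WL c) = (\<Sum>\<^sub>\<infinity>c\<in>coset_space G (carrier G) H. (cmod (f c))\<^sup>2 * WL c)"
    by (rule infsum_supp[symmetric, OF finZ ZS]) (auto simp: Z_def)
  finally show ?thesis unfolding Wl_def WL_def M_def by simp
qed

end

definition fib :: "'a \<Rightarrow> 'a set \<Rightarrow> 'a set set" where
  "fib t e = {d \<in> coset_space G (carrier G) H. H #> (t \<otimes> rep d) = e}"

definition eta :: "'a \<Rightarrow> ('a set \<Rightarrow> complex) \<Rightarrow> 'a set \<Rightarrow> real" where
  "eta t xi e = (\<Sum>d\<in>fib t e. cmod (xi d))"

lemma fib_sub: assumes t: "t \<in> carrier G" shows "fib t e \<subseteq> (\<lambda>c. c #> rep e) ` Cs (inv t)"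
proof
  fix d assume d: "d \<in> fib t e"
  then have dS: "d \<in> coset_space G (carrier G) H" and de: "H #> (t \<otimes> rep d) = e" unfolding fib_def by auto
  have rd: "rep d \<in> carrier G" "H #> rep d = d" using rep_K[OF subgroup_self H_carr dS] by auto
  obtain k where k: "k \<in> H" "rep e = k \<otimes> (t \<otimes> rep d)" using rep_obtain[of "t \<otimes> rep d"] t rd de by auto
  have "inv t \<otimes> inv k \<otimes> rep e = rep d" using k t rd H_mem[OF k(1)] by (simp add: m_assoc cancel2)
  then have "d = (H #> (inv t \<otimes> inv k)) #> rep e"
    using rc_mult[of "inv t \<otimes> inv k" "rep e"] rd k t H_mem[OF k(1)] by simp
  moreover have "H #> (inv t \<otimes> inv k) \<in> Cs (inv t)" unfolding Cs_def using k H_inv by auto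
  ultimately show "d \<in> (\<lambda>c. c #> rep e) ` Cs (inv t)" by force
qed

lemma fib_finite: "t \<in> carrier G \<Longrightarrow> finite (fib t e)"
  using fib_sub Cs_finite[of "inv t"] by (meson finite_imageI finite_subset inv_closed)

lemma fib_card: "t \<in> carrier G \<Longrightarrow> card (fib t e) \<le> N (inv t)"
proof -
  assume t: "t \<in> carrier G"
  have "card (fib t e) \<le> card ((\<lambda>c. c #> rep e) ` Cs (inv t))"
    using fib_sub[OF t] Cs_finite[of "inv t"] t by (intro card_mono) auto
  also have "\<dots> \<le> N (inv t)" unfolding N_def by (rule card_image_le) (use Cs_finite t in simp)
  finally show ?thesis .
qed

lemma eta_nn: "0 \<le> eta t xi e" unfolding eta_def by (simp add: sum_nonneg)

lemma eta_bound: assumes t: "t \<in> carrier G" and xi: "in_l2 (coset_space G (carrier G) H) xi"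
  and E: "finite E"
  shows "(\<Sum>e\<in>E. (eta t xi e)\<^sup>2) \<le> real (N (inv t)) * (\<Sum>\<^sub>\<infinity>d\<in>coset_space G (carrier G) H. (cmod (xi d))\<^sup>2)"
proof -
  have "(\<Sum>e\<in>E. (eta t xi e)\<^sup>2) \<le> (\<Sum>e\<in>E. real (N (inv t)) * (\<Sum>d\<in>fib t e. (cmod (xi d))\<^sup>2))"
  proof (rule sum_mono)
    fix e assume "e \<in> E"
    have "(eta t xi e)\<^sup>2 \<le> (\<Sum>d\<in>fib t e. (cmod (xi d))\<^sup>2) * real (card (fib t e))"
      unfolding eta_def by (rule sum_squared_le_sum_of_squares)
    also have "\<dots> \<le> (\<Sum>d\<in>fib t e. (cmod (xi d))\<^sup>2) * real (N (inv t))"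
      using fib_card[OF t] by (intro mult_left_mono) (auto intro: sum_nonneg)
    finally show "(eta t xi e)\<^sup>2 \<le> real (N (inv t)) * (\<Sum>d\<in>fib t e. (cmod (xi d))\<^sup>2)" by (simp add: mult_ac)
  qed
  also have "\<dots> = real (N (inv t)) * (\<Sum>d\<in>(\<Union>e\<in>E. fib t e). (cmod (xi d))\<^sup>2)"
  proof -
    have u: "(\<Sum>e\<in>E. (\<Sum>d\<in>fib t e. (cmod (xi d))\<^sup>2)) = (\<Sum>d\<in>(\<Union>e\<in>E. fib t e). (cmod (xi d))\<^sup>2)"
      by (rule sum.UNION_disjoint[symmetric]) (use E fib_finite[OF t] in simp, use E fib_finite[OF t] in simp, auto simp: fib_def)
    show ?thesis by (simp add: sum_distrib_left[symmetric] u)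
  qed
  also have "\<dots> \<le> real (N (inv t)) * (\<Sum>\<^sub>\<infinity>d\<in>coset_space G (carrier G) H. (cmod (xi d))\<^sup>2)"
  proof (rule mult_left_mono)
    show "(\<Sum>d\<in>(\<Union>e\<in>E. fib t e). (cmod (xi d))\<^sup>2) \<le> (\<Sum>\<^sub>\<infinity>d\<in>coset_space G (carrier G) H. (cmod (xi d))\<^sup>2)"
      using xi E fib_finite[OF t] unfolding in_l2_def by (intro sum_le_infsum) (auto simp: fib_def)
  qed simp
  finally show ?thesis .
qed

lemma cs_shift: assumes c: "c \<in> coset_space G (carrier G) H" and r: "r \<in> carrier G"
  shows "c #> r = H #> (rep c \<otimes> r)"
proof -
  have "H #> rep c = c" "rep c \<in> carrier G" using rep_K[OF subgroup_self H_carr c] by auto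
  then show ?thesis using rc_mult[of "rep c" r] r by simp
qed

lemma cs_carr: "c \<in> coset_space G (carrier G) H \<Longrightarrow> c \<subseteq> carrier G"
proof -
  assume "c \<in> coset_space G (carrier G) H"
  then obtain x where "x \<in> carrier G" "c = H #> x" unfolding coset_space_def by auto
  then show ?thesis using rc_carr by simp
qed

lemma shift_inj: assumes r: "r \<in> carrier G" shows "inj_on (\<lambda>e. e #> r) (coset_space G (carrier G) H)"
proof (rule inj_onI)
  fix a b assume a: "a \<in> coset_space G (carrier G) H" and b: "b \<in> coset_space G (carrier G) H" and e: "a #> r = b #> r"
  have ac: "a \<subseteq> carrier G" "b \<subseteq> carrier G" using cs_carr a b by auto
  have 1: "(a #> r) #> inv r = a"
  proof -
    have "(a #> r) #> inv r = a #> (r \<otimes> inv r)" by (rule coset_mult_assoc[OF ac(1) r]) (use r in simp)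
    also have "\<dots> = a" using r ac(1) by simp
    finally show ?thesis .
  qed
  have 2: "(b #> r) #> inv r = b"
  proof -
    have "(b #> r) #> inv r = b #> (r \<otimes> inv r)" by (rule coset_mult_assoc[OF ac(2) r]) (use r in simp)
    also have "\<dots> = b" using r ac(2) by simp
    finally show ?thesis .
  qed
  have "a = (a #> r) #> inv r" using 1 by simp
  also have "\<dots> = (b #> r) #> inv r" using e by (rule arg_cong)
  also have "\<dots> = b" by (rule 2)
  finally show "a = b" .
qed

context fixes K assumes K: "subgroup K G" and HK: "H \<subseteq> K"
begin

lemma SK_SG: "coset_space G K H \<subseteq> coset_space G (carrier G) H"
  unfolding coset_space_def using K_mem[OF K HK] by auto

lemma transfer: assumes f: "f \<in> hecke_algebra G K H" and r: "r \<in> carrier G" and c': "c' \<in> coset_space G K H"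
  shows "hconv G (carrier G) H f zz (c' #> r) = hconv G K H f (\<lambda>e'. zz (e' #> r)) c'"
proof -
  let ?SG = "coset_space G (carrier G) H" and ?SK = "coset_space G K H"
  have rc': "rep c' \<in> K" "rep c' \<in> carrier G" "H #> rep c' = c'" using rep_K[OF K HK c'] by auto
  have c'G: "c' \<in> ?SG" using c' SK_SG by auto
  have sh: "c' #> r = H #> (rep c' \<otimes> r)" using cs_shift[OF c'G r] .
  obtain k1 where k1: "k1 \<in> H" "rep (c' #> r) = k1 \<otimes> (rep c' \<otimes> r)" using rep_obtain[of "rep c' \<otimes> r"] rc' r sh by auto
  define T where "T d = f (H #> (rep (c' #> r) \<otimes> inv (rep d))) * zz d" for d
  have img: "(\<lambda>e. e #> r) ` ?SK \<subseteq> ?SG"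
  proof
    fix x assume "x \<in> (\<lambda>e. e #> r) ` ?SK"
    then obtain e where e: "e \<in> ?SK" "x = e #> r" by auto
    have "e #> r = H #> (rep e \<otimes> r)" using cs_shift[of e r] e SK_SG r by auto
    then show "x \<in> ?SG" using e rep_K[OF K HK e(1)] r cs_I[OF subgroup_self H_carr] by simp
  qed
  have zero: "T d = 0" if d: "d \<in> ?SG - (\<lambda>e. e #> r) ` ?SK" for d
  proof -
    have rd: "rep d \<in> carrier G" "H #> rep d = d" using rep_K[OF subgroup_self H_carr] d by auto
    have "rep (c' #> r) \<otimes> inv (rep d) \<notin> K"
    proof
      assume q: "rep (c' #> r) \<otimes> inv (rep d) \<in> K"
      have eq: "rep d \<otimes> inv r = inv (rep (c' #> r) \<otimes> inv (rep d)) \<otimes> k1 \<otimes> rep c'"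
        using k1 rd rc' r H_mem[OF k1(1)] by (simp add: m_assoc inv_mult_group)
      have "rep d \<otimes> inv r \<in> K" unfolding eq using q k1 HK rc' K_mult[OF K HK] K_inv[OF K HK] by auto
      then have "H #> (rep d \<otimes> inv r) \<in> ?SK" by (rule cs_I[OF K HK])
      moreover have "d = (H #> (rep d \<otimes> inv r)) #> r"
        using rc_mult[of "rep d \<otimes> inv r" r] rd r by (simp add: m_assoc)
      ultimately show False using d by auto
    qed
    then have "H #> (rep (c' #> r) \<otimes> inv (rep d)) \<notin> ?SK"
      using cs_rcD[OF K HK] rd k1 rc' r H_mem[OF k1(1)] by auto
    then show ?thesis unfolding T_def using HA_zero[OF K HK f] by simp
  qed
  have "hconv G (carrier G) H f zz (c' #> r) = infsum T ?SG" unfolding hconv_def T_def ..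
  also have "\<dots> = infsum T ((\<lambda>e. e #> r) ` ?SK)"
    by (rule infsum_cong_neutral) (use zero img in auto)
  also have "\<dots> = infsum (T \<circ> (\<lambda>e. e #> r)) ?SK"
    by (rule infsum_reindex) (rule inj_on_subset[OF shift_inj[OF r] SK_SG])
  also have "\<dots> = hconv G K H f (\<lambda>e'. zz (e' #> r)) c'"
    unfolding hconv_def
  proof (rule infsum_cong)
    fix e assume e: "e \<in> ?SK"
    have re: "rep e \<in> K" "rep e \<in> carrier G" using rep_K[OF K HK e] by auto
    have eG: "e \<in> ?SG" using e SK_SG by auto
    obtain k2 where k2: "k2 \<in> H" "rep (e #> r) = k2 \<otimes> (rep e \<otimes> r)"
      using rep_obtain[of "rep e \<otimes> r"] re r cs_shift[OF eG r] by auto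
    have eq: "rep (c' #> r) \<otimes> inv (rep (e #> r)) = k1 \<otimes> (rep c' \<otimes> inv (rep e)) \<otimes> inv k2"
      using k1 k2 re rc' r H_mem[OF k1(1)] H_mem[OF k2(1)] by (simp add: m_assoc inv_mult_group cancel1)
    have "f (H #> (rep (c' #> r) \<otimes> inv (rep (e #> r)))) = f (H #> (rep c' \<otimes> inv (rep e)))"
      unfolding eq using HA_inv[OF K HK f, of "rep c' \<otimes> inv (rep e)" k1 "inv k2"] k1 k2 re rc' H_inv
        K_mult[OF K HK] K_inv[OF K HK] by simp
    then show "(T \<circ> (\<lambda>e. e #> r)) e = f (H #> (rep c' \<otimes> inv (rep e))) * zz (e #> r)"
      unfolding T_def by simp
  qed
  finally show ?thesis .
qed

end

lemma sqrt_le_sq: fixes a b :: real assumes "0 \<le> a" "0 \<le> b" "sqrt a \<le> b" shows "a \<le> b\<^sup>2"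
  using assms by (metis real_sqrt_le_iff real_sqrt_unique)

context fixes K l s C assumes K: "subgroup K G" and HK: "H \<subseteq> K" and C0: "(C::real) \<ge> 0"
  and RDK: "\<And>f xi. f \<in> hecke_algebra G K H \<Longrightarrow> in_l2 (coset_space G K H) xi \<Longrightarrow>
        l2_norm (coset_space G K H) (hconv G K H f xi)
          \<le> C * sqrt (\<Sum>\<^sub>\<infinity>c\<in>coset_space G K H. (cmod (f c))\<^sup>2 * (1 + l (rep c)) powr (2 * (s::real))) * l2_norm (coset_space G K H) xi"
begin

lemma trd: assumes f: "f \<in> hecke_algebra G K H" and F: "finite F" "F \<subseteq> coset_space G K H"
  shows "\<exists>E. finite E \<and> E \<subseteq> coset_space G K H \<and>
    (\<Sum>c\<in>F. (cmod (hconv G K H f z c))\<^sup>2)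
      \<le> C\<^sup>2 * (\<Sum>\<^sub>\<infinity>c\<in>coset_space G K H. (cmod (f c))\<^sup>2 * (1 + l (rep c)) powr (2 * s)) * (\<Sum>e\<in>E. (cmod (z e))\<^sup>2)"
proof -
  let ?SK = "coset_space G K H"
  define W where "W = (\<Sum>\<^sub>\<infinity>c\<in>?SK. (cmod (f c))\<^sup>2 * (1 + l (rep c)) powr (2 * s))"
  define E where "E = (\<Union>c\<in>F. {e \<in> ?SK. f (H #> (rep c \<otimes> inv (rep e))) \<noteq> 0})"
  have finE: "finite E" unfolding E_def
    using F row_fin[OF K HK f] rep_K[OF K HK] by (intro finite_UN_I) auto
  have ES: "E \<subseteq> ?SK" unfolding E_def by auto
  define zE where "zE e = (if e \<in> E then z e else 0)" for e
  have hE: "hconv G K H f zE c = hconv G K H f z c" if c: "c \<in> F" for c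
    unfolding hconv_def zE_def
  proof (rule infsum_cong)
    fix e assume e: "e \<in> ?SK"
    show "f (H #> (rep c \<otimes> inv (rep e))) * (if e \<in> E then z e else 0) = f (H #> (rep c \<otimes> inv (rep e))) * z e"
      using c e unfolding E_def by auto
  qed
  define Y where "Y = (\<Union>e\<in>E. {c \<in> ?SK. f (H #> (rep c \<otimes> inv (rep e))) \<noteq> 0})"
  have finY: "finite Y" unfolding Y_def
    using finE ES col_fin[OF K HK f] rep_K[OF K HK] by (intro finite_UN_I) auto
  have YS: "Y \<subseteq> ?SK" unfolding Y_def by auto
  have h0: "hconv G K H f zE c = 0" if c: "c \<in> ?SK - Y" for c
    unfolding hconv_def zE_def by (rule infsum_0) (use c in \<open>auto simp: Y_def\<close>)
  have sumh: "(\<lambda>c. (cmod (hconv G K H f zE c))\<^sup>2) summable_on ?SK"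
  proof -
    have "(\<lambda>c. (cmod (hconv G K H f zE c))\<^sup>2) summable_on ?SK \<longleftrightarrow> (\<lambda>c. (cmod (hconv G K H f zE c))\<^sup>2) summable_on Y"
      by (rule summable_on_cong_neutral) (use h0 YS in auto)
    then show ?thesis using finY by simp
  qed
  have l2z: "in_l2 ?SK zE" unfolding in_l2_def
  proof -
    have "(\<lambda>c. (cmod (zE c))\<^sup>2) summable_on ?SK \<longleftrightarrow> (\<lambda>c. (cmod (zE c))\<^sup>2) summable_on E"
      by (rule summable_on_cong_neutral) (use ES in \<open>auto simp: zE_def\<close>)
    then show "(\<lambda>c. (cmod (zE c))\<^sup>2) summable_on ?SK" using finE by simp
  qed
  have nz: "(\<Sum>\<^sub>\<infinity>c\<in>?SK. (cmod (zE c))\<^sup>2) = (\<Sum>e\<in>E. (cmod (z e))\<^sup>2)"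
  proof -
    have "(\<Sum>\<^sub>\<infinity>c\<in>?SK. (cmod (zE c))\<^sup>2) = (\<Sum>e\<in>E. (cmod (zE e))\<^sup>2)"
      by (rule infsum_supp[OF finE ES]) (auto simp: zE_def)
    also have "\<dots> = (\<Sum>e\<in>E. (cmod (z e))\<^sup>2)" by (rule sum.cong) (auto simp: zE_def)
    finally show ?thesis .
  qed
  have W0: "W \<ge> 0" unfolding W_def by (rule infsum_nonneg) simp
  have RD1: "sqrt (\<Sum>\<^sub>\<infinity>c\<in>?SK. (cmod (hconv G K H f zE c))\<^sup>2) \<le> C * sqrt W * sqrt (\<Sum>e\<in>E. (cmod (z e))\<^sup>2)"
    using RDK[OF f l2z] unfolding l2_norm_def W_def nz by simp
  have "(\<Sum>\<^sub>\<infinity>c\<in>?SK. (cmod (hconv G K H f zE c))\<^sup>2) \<le> (C * sqrt W * sqrt (\<Sum>e\<in>E. (cmod (z e))\<^sup>2))\<^sup>2"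
    by (rule sqrt_le_sq[OF _ _ RD1]) (auto intro!: infsum_nonneg mult_nonneg_nonneg C0 W0 sum_nonneg)
  also have "\<dots> = C\<^sup>2 * W * (\<Sum>e\<in>E. (cmod (z e))\<^sup>2)"
    using W0 by (simp add: power_mult_distrib sum_nonneg)
  finally have main: "(\<Sum>\<^sub>\<infinity>c\<in>?SK. (cmod (hconv G K H f zE c))\<^sup>2) \<le> C\<^sup>2 * W * (\<Sum>e\<in>E. (cmod (z e))\<^sup>2)" .
  have "(\<Sum>c\<in>F. (cmod (hconv G K H f z c))\<^sup>2) = (\<Sum>c\<in>F. (cmod (hconv G K H f zE c))\<^sup>2)"
    using hE by simp
  also have "\<dots> \<le> (\<Sum>\<^sub>\<infinity>c\<in>?SK. (cmod (hconv G K H f zE c))\<^sup>2)"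
    by (rule sum_le_infsum[OF sumh _ F]) simp
  finally show ?thesis using main finE ES unfolding W_def by (intro exI[of _ E]) auto
qed

end

context fixes K f R assumes K: "subgroup K G" and HK: "H \<subseteq> K"
  and f: "f \<in> hecke_algebra G (carrier G) H"
  and finR: "finite R" and RG: "R \<subseteq> carrier G"
  and cover: "\<And>x. x \<in> carrier G \<Longrightarrow> \<exists>r\<in>R. x \<otimes> inv r \<in> K"
begin

lemma fp_real: "fp K f t x = complex_of_real (cmod (fp K f t x))"
proof -
  have "0 \<le> (\<Sum>c\<in>P (rep x) t. (cmod (f c))\<^sup>2 / real (N (rep c)))" by (intro sum_nonneg) auto
  then show ?thesis unfolding fp_def by auto
qed

lemma fpG: "t \<in> carrier G \<Longrightarrow> fp K f t \<in> hecke_algebra G (carrier G) H"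
  using HA_sub[OF K HK fp_HA[OF K HK f]] by simp

lemma dom: assumes c: "c \<in> coset_space G (carrier G) H" and d: "d \<in> coset_space G (carrier G) H"
  shows "cmod (f (H #> (rep c \<otimes> inv (rep d))))
     \<le> (\<Sum>t\<in>R. cmod (fp K f t (H #> (rep c \<otimes> inv (rep (H #> (t \<otimes> rep d)))))))"
proof -
  have rc: "rep c \<in> carrier G" and rd: "rep d \<in> carrier G"
    using rep_K[OF subgroup_self H_carr c] rep_K[OF subgroup_self H_carr d] by auto
  obtain t where t: "t \<in> R" "(rep c \<otimes> inv (rep d)) \<otimes> inv t \<in> K" using cover[of "rep c \<otimes> inv (rep d)"] rc rd by auto
  have tc: "t \<in> carrier G" using t RG by auto
  define g where "g = rep c \<otimes> inv (rep d) \<otimes> inv t"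
  have gK: "g \<in> K" unfolding g_def using t by simp
  have gc: "g \<in> carrier G" using gK K_mem[OF K HK] by simp
  obtain k where k: "k \<in> H" "rep (H #> (t \<otimes> rep d)) = k \<otimes> (t \<otimes> rep d)" using rep_obtain[of "t \<otimes> rep d"] tc rd by auto
  have e1: "rep c \<otimes> inv (rep (H #> (t \<otimes> rep d))) = g \<otimes> inv k"
    unfolding g_def using k tc rc rd H_mem[OF k(1)] by (simp add: m_assoc inv_mult_group)
  have e2: "g \<otimes> t = rep c \<otimes> inv (rep d)" unfolding g_def using tc rc rd by (simp add: m_assoc)
  have "fp K f t (H #> (g \<otimes> inv k)) = fp K f t (H #> g)"
    using fp_HA[OF K HK f tc] gK H_inv[OF k(1)] unfolding hecke_algebra_def by auto
  then have "cmod (f (H #> (rep c \<otimes> inv (rep d)))) \<le> cmod (fp K f t (H #> (rep c \<otimes> inv (rep (H #> (t \<otimes> rep d))))))"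
    using fp_dom[OF K HK f tc gK] unfolding e1 e2 by simp
  also have "\<dots> \<le> (\<Sum>t\<in>R. cmod (fp K f t (H #> (rep c \<otimes> inv (rep (H #> (t \<otimes> rep d)))))))"
    by (rule member_le_sum[OF t(1)]) (auto simp: finR)
  finally show ?thesis .
qed

lemma pointwise: assumes c: "c \<in> coset_space G (carrier G) H"
  shows "cmod (hconv G (carrier G) H f xi c)
    \<le> (\<Sum>t\<in>R. cmod (hconv G (carrier G) H (fp K f t) (\<lambda>e. complex_of_real (eta t xi e)) c))"
proof -
  let ?SG = "coset_space G (carrier G) H"
  define x where "x = rep c"
  have xc: "x \<in> carrier G" unfolding x_def using rep_K[OF subgroup_self H_carr c] by auto
  define D where "D = {d \<in> ?SG. f (H #> (x \<otimes> inv (rep d))) \<noteq> 0}"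
  have finD: "finite D" unfolding D_def by (rule row_fin[OF subgroup_self H_carr f xc])
  define F where "F t e = cmod (fp K f t (H #> (x \<otimes> inv (rep e))))" for t e
  define tau where "tau t d = H #> (t \<otimes> rep d)" for t d
  have "hconv G (carrier G) H f xi c = (\<Sum>d\<in>D. f (H #> (x \<otimes> inv (rep d))) * xi d)"
    unfolding hconv_def x_def[symmetric] by (rule infsum_supp[OF finD]) (auto simp: D_def)
  then have "cmod (hconv G (carrier G) H f xi c) \<le> (\<Sum>d\<in>D. cmod (f (H #> (x \<otimes> inv (rep d)))) * cmod (xi d))"
    by (metis (no_types, lifting) norm_mult norm_sum sum.cong)
  also have "\<dots> \<le> (\<Sum>d\<in>D. (\<Sum>t\<in>R. F t (tau t d)) * cmod (xi d))"
    using dom[OF c] unfolding F_def tau_def x_def D_def by (intro sum_mono mult_right_mono) auto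
  also have "\<dots> = (\<Sum>t\<in>R. \<Sum>d\<in>D. F t (tau t d) * cmod (xi d))"
    by (simp add: sum_distrib_right sum.swap[of _ D R])
  also have "\<dots> \<le> (\<Sum>t\<in>R. cmod (hconv G (carrier G) H (fp K f t) (\<lambda>e. complex_of_real (eta t xi e)) c))"
  proof (rule sum_mono)
    fix t assume tR: "t \<in> R"
    have tc: "t \<in> carrier G" using tR RG by auto
    define Ec where "Ec = {e \<in> ?SG. fp K f t (H #> (x \<otimes> inv (rep e))) \<noteq> 0}"
    have finEc: "finite Ec" unfolding Ec_def by (rule row_fin[OF subgroup_self H_carr fpG[OF tc] xc])
    define D2 where "D2 = (\<Union>e\<in>Ec. fib t e)"
    have finD2: "finite D2" unfolding D2_def using finEc fib_finite[OF tc] by auto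
    have F0: "F t e \<ge> 0" for e unfolding F_def by simp
    have "(\<Sum>d\<in>D. F t (tau t d) * cmod (xi d)) = (\<Sum>d\<in>D \<inter> D2. F t (tau t d) * cmod (xi d))"
    proof (rule sum.mono_neutral_right[OF finD])
      show "D \<inter> D2 \<subseteq> D" by auto
      show "\<forall>d\<in>D - D \<inter> D2. F t (tau t d) * cmod (xi d) = 0"
      proof
        fix d assume d: "d \<in> D - D \<inter> D2"
        then have dS: "d \<in> ?SG" unfolding D_def by auto
        have rd: "rep d \<in> carrier G" using rep_K[OF subgroup_self H_carr dS] by auto
        have "tau t d \<notin> Ec"
        proof
          assume "tau t d \<in> Ec"
          moreover have "d \<in> fib t (tau t d)" unfolding fib_def tau_def using dS by auto
          ultimately show False using d unfolding D2_def by auto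
        qed
        moreover have "tau t d \<in> ?SG" unfolding tau_def using tc rd cs_I[OF subgroup_self H_carr] by simp
        ultimately have "F t (tau t d) = 0" unfolding Ec_def F_def by auto
        then show "F t (tau t d) * cmod (xi d) = 0" by simp
      qed
    qed
    also have "\<dots> \<le> (\<Sum>d\<in>D2. F t (tau t d) * cmod (xi d))"
      by (rule sum_mono2[OF finD2]) (auto simp: F0)
    also have "\<dots> = (\<Sum>e\<in>Ec. \<Sum>d\<in>fib t e. F t (tau t d) * cmod (xi d))"
      unfolding D2_def
      by (rule sum.UNION_disjoint) (use finEc fib_finite[OF tc] in simp, use finEc fib_finite[OF tc] in simp, auto simp: fib_def)
    also have "\<dots> = (\<Sum>e\<in>Ec. F t e * eta t xi e)"
      unfolding eta_def by (rule sum.cong[OF refl]) (auto simp: sum_distrib_left fib_def tau_def intro!: sum.cong)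
    also have "\<dots> = cmod (hconv G (carrier G) H (fp K f t) (\<lambda>e. complex_of_real (eta t xi e)) c)"
    proof -
      have h1: "hconv G (carrier G) H (fp K f t) (\<lambda>e. complex_of_real (eta t xi e)) c
          = (\<Sum>e\<in>Ec. fp K f t (H #> (x \<otimes> inv (rep e))) * complex_of_real (eta t xi e))"
        unfolding hconv_def x_def[symmetric] by (rule infsum_supp[OF finEc]) (auto simp: Ec_def)
      have h2: "(\<Sum>e\<in>Ec. fp K f t (H #> (x \<otimes> inv (rep e))) * complex_of_real (eta t xi e))
          = (\<Sum>e\<in>Ec. complex_of_real (F t e * eta t xi e))"
        by (rule sum.cong[OF refl]) (subst fp_real, simp add: F_def)
      have "cmod (hconv G (carrier G) H (fp K f t) (\<lambda>e. complex_of_real (eta t xi e)) c)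
          = cmod (complex_of_real (\<Sum>e\<in>Ec. F t e * eta t xi e))"
        unfolding h1 h2 of_real_sum ..
      also have "\<dots> = \<bar>\<Sum>e\<in>Ec. F t e * eta t xi e\<bar>" by (rule norm_of_real)
      also have "\<dots> = (\<Sum>e\<in>Ec. F t e * eta t xi e)" using F0 eta_nn by (simp add: sum_nonneg)
      finally show ?thesis by simp
    qed
    finally show "(\<Sum>d\<in>D. F t (tau t d) * cmod (xi d)) \<le> cmod (hconv G (carrier G) H (fp K f t) (\<lambda>e. complex_of_real (eta t xi e)) c)" .
  qed
  finally show ?thesis .
qed

end

lemma sum_UN_le_nn: fixes g :: "_ \<Rightarrow> real"
  assumes "finite I" "\<And>i. i \<in> I \<Longrightarrow> finite (A i)" "\<And>x. 0 \<le> g x"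
  shows "sum g (\<Union>i\<in>I. A i) \<le> (\<Sum>i\<in>I. sum g (A i))"
  using assms
proof (induction I rule: finite_induct)
  case empty then show ?case by simp
next
  case (insert i I)
  have fU: "finite (\<Union>i\<in>I. A i)" using insert by auto
  have "sum g (\<Union>j\<in>insert i I. A j) = sum g (A i \<union> (\<Union>j\<in>I. A j))" by simp
  also have "\<dots> \<le> sum g (A i) + sum g (\<Union>j\<in>I. A j)"
    using sum_Un[of "A i" "\<Union>j\<in>I. A j" g] insert fU by (simp add: sum_nonneg)
  also have "\<dots> \<le> sum g (A i) + (\<Sum>j\<in>I. sum g (A j))" using insert by simp
  also have "\<dots> = (\<Sum>j\<in>insert i I. sum g (A j))" using insert by simp
  finally show ?case .
qed

context fixes K l s C f R t xi assumes K: "subgroup K G" and HK: "H \<subseteq> K" and C0: "(C::real) \<ge> 0"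
  and RDK: "\<And>f xi. f \<in> hecke_algebra G K H \<Longrightarrow> in_l2 (coset_space G K H) xi \<Longrightarrow>
        l2_norm (coset_space G K H) (hconv G K H f xi)
          \<le> C * sqrt (\<Sum>\<^sub>\<infinity>c\<in>coset_space G K H. (cmod (f c))\<^sup>2 * (1 + l (rep c)) powr (2 * (s::real))) * l2_norm (coset_space G K H) xi"
  and f: "f \<in> hecke_algebra G (carrier G) H"
  and finR: "finite R" and RG: "R \<subseteq> carrier G"
  and cover: "\<And>x. x \<in> carrier G \<Longrightarrow> \<exists>r\<in>R. x \<otimes> inv r \<in> K"
  and t: "t \<in> carrier G" and xi: "in_l2 (coset_space G (carrier G) H) xi"
begin

lemma pert: assumes F: "finite F" "F \<subseteq> coset_space G (carrier G) H"
  shows "(\<Sum>c\<in>F. (cmod (hconv G (carrier G) H (fp K f t) (\<lambda>e. complex_of_real (eta t xi e)) c))\<^sup>2)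
    \<le> real (card R) * (C\<^sup>2 * (\<Sum>\<^sub>\<infinity>c\<in>coset_space G K H. (cmod (fp K f t c))\<^sup>2 * (1 + l (rep c)) powr (2 * s))
        * (real (N (inv t)) * (\<Sum>\<^sub>\<infinity>d\<in>coset_space G (carrier G) H. (cmod (xi d))\<^sup>2)))"
proof -
  let ?SG = "coset_space G (carrier G) H" and ?SK = "coset_space G K H"
  define z where "z e = complex_of_real (eta t xi e)" for e
  define V where "V c = (cmod (hconv G (carrier G) H (fp K f t) z c))\<^sup>2" for c
  define Wt where "Wt = (\<Sum>\<^sub>\<infinity>c\<in>?SK. (cmod (fp K f t c))\<^sup>2 * (1 + l (rep c)) powr (2 * s))"
  define X2 where "X2 = (\<Sum>\<^sub>\<infinity>d\<in>?SG. (cmod (xi d))\<^sup>2)"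
  define Fr where "Fr r = (\<lambda>e. e #> r) -` F \<inter> ?SK" for r
  have Wt0: "Wt \<ge> 0" unfolding Wt_def by (rule infsum_nonneg) simp
  have X20: "X2 \<ge> 0" unfolding X2_def by (rule infsum_nonneg) simp
  have Rc: "r \<in> R \<Longrightarrow> r \<in> carrier G" for r using RG by auto
  have injr: "r \<in> R \<Longrightarrow> inj_on (\<lambda>e. e #> r) ?SK" for r using inj_on_subset[OF shift_inj SK_SG[OF K HK]] Rc by auto
  have finFr: "r \<in> R \<Longrightarrow> finite (Fr r)" for r unfolding Fr_def using F(1) injr by (intro finite_vimage_IntI) auto
  have fpK: "fp K f t \<in> hecke_algebra G K H" by (rule fp_HA[OF K HK f t])
  have cov: "F \<subseteq> (\<Union>r\<in>R. (\<lambda>e. e #> r) ` Fr r)"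
  proof
    fix c assume cF: "c \<in> F"
    then have cS: "c \<in> ?SG" using F by auto
    have rc: "rep c \<in> carrier G" "H #> rep c = c" using rep_K[OF subgroup_self H_carr cS] by auto
    obtain r where r: "r \<in> R" "rep c \<otimes> inv r \<in> K" using cover rc by auto
    define c' where "c' = H #> (rep c \<otimes> inv r)"
    have c'S: "c' \<in> ?SK" unfolding c'_def using cs_I[OF K HK r(2)] .
    have "c' #> r = c" unfolding c'_def using rc_mult[of "rep c \<otimes> inv r" r] rc Rc[OF r(1)] by (simp add: m_assoc)
    then have "c' \<in> Fr r" "c = c' #> r" unfolding Fr_def using c'S cF by auto
    then show "c \<in> (\<Union>r\<in>R. (\<lambda>e. e #> r) ` Fr r)" using r(1) by blast
  qed
  have per_r: "(\<Sum>c\<in>(\<lambda>e. e #> r) ` Fr r. V c) \<le> C\<^sup>2 * Wt * (real (N (inv t)) * X2)" if r: "r \<in> R" for r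
  proof -
    have "(\<Sum>c\<in>(\<lambda>e. e #> r) ` Fr r. V c) = (\<Sum>c'\<in>Fr r. V (c' #> r))"
      by (subst sum.reindex) (use inj_on_subset[OF injr[OF r], of "Fr r"] in \<open>auto simp: Fr_def\<close>)
    also have "\<dots> = (\<Sum>c'\<in>Fr r. (cmod (hconv G K H (fp K f t) (\<lambda>e'. z (e' #> r)) c'))\<^sup>2)"
      unfolding V_def by (rule sum.cong[OF refl]) (use transfer[OF K HK fpK Rc[OF r]] in \<open>auto simp: Fr_def\<close>)
    finally have eq: "(\<Sum>c\<in>(\<lambda>e. e #> r) ` Fr r. V c) = (\<Sum>c'\<in>Fr r. (cmod (hconv G K H (fp K f t) (\<lambda>e'. z (e' #> r)) c'))\<^sup>2)" .
    obtain E where E: "finite E" "E \<subseteq> ?SK"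
      "(\<Sum>c'\<in>Fr r. (cmod (hconv G K H (fp K f t) (\<lambda>e'. z (e' #> r)) c'))\<^sup>2) \<le> C\<^sup>2 * Wt * (\<Sum>e\<in>E. (cmod (z (e #> r)))\<^sup>2)"
      using trd[OF K HK C0 RDK fpK finFr[OF r], of "\<lambda>e'. z (e' #> r)"] unfolding Wt_def Fr_def by auto
    have "(\<Sum>e\<in>E. (cmod (z (e #> r)))\<^sup>2) = (\<Sum>e\<in>E. (eta t xi (e #> r))\<^sup>2)"
      unfolding z_def using eta_nn by simp
    also have "\<dots> = (\<Sum>e\<in>(\<lambda>e. e #> r) ` E. (eta t xi e)\<^sup>2)"
      by (subst sum.reindex) (use inj_on_subset[OF injr[OF r] E(2)] in auto)
    also have "\<dots> \<le> real (N (inv t)) * X2" unfolding X2_def using eta_bound[OF t xi] E(1) by simp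
    finally have "(\<Sum>e\<in>E. (cmod (z (e #> r)))\<^sup>2) \<le> real (N (inv t)) * X2" .
    then have "C\<^sup>2 * Wt * (\<Sum>e\<in>E. (cmod (z (e #> r)))\<^sup>2) \<le> C\<^sup>2 * Wt * (real (N (inv t)) * X2)"
      using Wt0 by (intro mult_left_mono) auto
    then show ?thesis using eq E(3) by linarith
  qed
  have "(\<Sum>c\<in>F. V c) \<le> (\<Sum>c\<in>(\<Union>r\<in>R. (\<lambda>e. e #> r) ` Fr r). V c)"
    by (rule sum_mono2[OF _ cov]) (use finR finFr in \<open>auto simp: V_def\<close>)
  also have "\<dots> \<le> (\<Sum>r\<in>R. \<Sum>c\<in>(\<lambda>e. e #> r) ` Fr r. V c)"
    by (rule sum_UN_le_nn[OF finR]) (use finFr in \<open>auto simp: V_def\<close>)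
  also have "\<dots> \<le> (\<Sum>r\<in>R. C\<^sup>2 * Wt * (real (N (inv t)) * X2))" by (rule sum_mono) (rule per_r)
  also have "\<dots> = real (card R) * (C\<^sup>2 * Wt * (real (N (inv t)) * X2))" by simp
  finally show ?thesis unfolding V_def z_def Wt_def X2_def .
qed

end

lemma dir2: assumes K: "subgroup K G" and HK: "H \<subseteq> K" and fin: "finite ((\<lambda>x. K #> x) ` carrier G)"
  and RD: "property_RD G K H"
  shows "property_RD G (carrier G) H"
proof -
  let ?SG = "coset_space G (carrier G) H" and ?SK = "coset_space G K H"
  obtain l s C where len: "length_function G K H l" and s: "s > 0" and C: "C > 0"
    and RD0: "\<forall>f\<in>hecke_algebra G K H. \<forall>xi. in_l2 ?SK xi \<longrightarrow>
        l2_norm ?SK (hconv G K H f xi)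
          \<le> C * sqrt (\<Sum>\<^sub>\<infinity>c\<in>?SK. (cmod (f c))\<^sup>2 * (1 + l (rep c)) powr (2 * s)) * l2_norm ?SK xi"
    using RD unfolding property_RD_def by blast
  have RDK: "\<And>f xi. f \<in> hecke_algebra G K H \<Longrightarrow> in_l2 ?SK xi \<Longrightarrow>
        l2_norm ?SK (hconv G K H f xi)
          \<le> C * sqrt (\<Sum>\<^sub>\<infinity>c\<in>?SK. (cmod (f c))\<^sup>2 * (1 + l (rep c)) powr (2 * s)) * l2_norm ?SK xi"
    using RD0 by blast
  have C0: "C \<ge> 0" using C by simp
  obtain R where finR: "finite R" and RG: "R \<subseteq> carrier G" and R1: "\<one> \<in> R"
    and cov0: "\<forall>x\<in>carrier G. \<exists>r\<in>R. x \<otimes> inv r \<in> K"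
    using reps_exist[OF K fin] by blast
  have cover: "\<And>x. x \<in> carrier G \<Longrightarrow> \<exists>r\<in>R. x \<otimes> inv r \<in> K" using cov0 by blast
  define L where "L = Lx K l R"
  have LL: "length_function G (carrier G) H L" unfolding L_def by (rule Lx_length[OF K HK len finR RG R1 cover])
  have lL: "\<And>x. x \<in> K \<Longrightarrow> l x \<le> L x" unfolding L_def by (rule Lx_K[OF K HK len finR RG R1 cover])
  have lnn: "\<And>x. x \<in> K \<Longrightarrow> 0 \<le> l x" by (rule l_nonneg[OF K HK len])
  have Lnn: "\<And>x. x \<in> carrier G \<Longrightarrow> 0 \<le> L x" using LL unfolding length_function_def by metis
  define Nt where "Nt t = real (N (inv t))" for t
  define Mt where "Mt t = (1 + L (inv t)) powr (2 * s)" for t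
  define K0 where "K0 = (real (card R))\<^sup>2 * (\<Sum>t\<in>R. Nt t * Nt t * Mt t)"
  have Rc: "t \<in> R \<Longrightarrow> t \<in> carrier G" for t using RG by auto
  have Ntp: "t \<in> R \<Longrightarrow> Nt t > 0" for t unfolding Nt_def using N_pos[of "inv t"] Rc by simp
  have Mtp: "t \<in> R \<Longrightarrow> Mt t > 0" for t unfolding Mt_def using Lnn[of "inv t"] Rc
    by (metis add_pos_nonneg inv_closed powr_gt_zero zero_less_one order_less_irrefl)
  have cardR: "card R > 0" using finR R1 by (auto simp: card_gt_0_iff)
  have K0p: "K0 > 0" unfolding K0_def using cardR Ntp Mtp R1 finR
    by (intro mult_pos_pos sum_pos) auto
  define C' where "C' = C * sqrt K0"
  have C'p: "C' > 0" unfolding C'_def using C K0p by simp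
  have main: "l2_norm ?SG (hconv G (carrier G) H f xi)
          \<le> C' * sqrt (\<Sum>\<^sub>\<infinity>c\<in>?SG. (cmod (f c))\<^sup>2 * (1 + L (rep c)) powr (2 * s)) * l2_norm ?SG xi"
    if f: "f \<in> hecke_algebra G (carrier G) H" and xi: "in_l2 ?SG xi" for f xi
  proof -
    define W where "W = (\<Sum>\<^sub>\<infinity>c\<in>?SG. (cmod (f c))\<^sup>2 * (1 + L (rep c)) powr (2 * s))"
    define X2 where "X2 = (\<Sum>\<^sub>\<infinity>d\<in>?SG. (cmod (xi d))\<^sup>2)"
    define V where "V t c = cmod (hconv G (carrier G) H (fp K f t) (\<lambda>e. complex_of_real (eta t xi e)) c)" for t c
    define Wt where "Wt t = (\<Sum>\<^sub>\<infinity>c\<in>?SK. (cmod (fp K f t c))\<^sup>2 * (1 + l (rep c)) powr (2 * s))" for t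
    have W0: "W \<ge> 0" unfolding W_def by (rule infsum_nonneg) simp
    have X20: "X2 \<ge> 0" unfolding X2_def by (rule infsum_nonneg) simp
    have Wt0: "Wt t \<ge> 0" for t unfolding Wt_def by (rule infsum_nonneg) simp
    have Wtle: "t \<in> R \<Longrightarrow> Wt t \<le> Nt t * Mt t * W" for t
      unfolding Wt_def Nt_def Mt_def W_def using fp_weight[OF K HK f Rc lL lnn LL s] by simp
    have bound: "(\<Sum>\<^sub>\<infinity>c\<in>?SG. (cmod (hconv G (carrier G) H f xi c))\<^sup>2) \<le> C\<^sup>2 * K0 * W * X2"
    proof (rule infsum_le_bound)
      fix F assume F: "finite F" "F \<subseteq> ?SG"
      have "(\<Sum>c\<in>F. (cmod (hconv G (carrier G) H f xi c))\<^sup>2) \<le> (\<Sum>c\<in>F. (\<Sum>t\<in>R. V t c)\<^sup>2)"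
      proof (rule sum_mono)
        fix c assume "c \<in> F"
        then have c: "c \<in> ?SG" using F by auto
        show "(cmod (hconv G (carrier G) H f xi c))\<^sup>2 \<le> (\<Sum>t\<in>R. V t c)\<^sup>2"
          unfolding V_def by (rule power_mono[OF pointwise[OF K HK f finR RG cover c]]) auto
      qed
      also have "\<dots> \<le> (\<Sum>c\<in>F. (\<Sum>t\<in>R. (V t c)\<^sup>2) * real (card R))"
        by (rule sum_mono) (rule sum_squared_le_sum_of_squares)
      also have "\<dots> = real (card R) * (\<Sum>t\<in>R. \<Sum>c\<in>F. (V t c)\<^sup>2)"
        by (simp add: sum_distrib_left sum_distrib_right sum.swap[of _ F R] mult_ac)
      also have "\<dots> \<le> real (card R) * (\<Sum>t\<in>R. real (card R) * (C\<^sup>2 * Wt t * (Nt t * X2)))"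
      proof (rule mult_left_mono, rule sum_mono)
        fix t assume t: "t \<in> R"
        show "(\<Sum>c\<in>F. (V t c)\<^sup>2) \<le> real (card R) * (C\<^sup>2 * Wt t * (Nt t * X2))"
          unfolding V_def Wt_def Nt_def X2_def by (rule pert[OF K HK C0 RDK f finR RG cover Rc[OF t] xi F])
      qed simp
      also have "\<dots> \<le> real (card R) * (\<Sum>t\<in>R. real (card R) * (C\<^sup>2 * (Nt t * Mt t * W) * (Nt t * X2)))"
      proof (rule mult_left_mono, rule sum_mono)
        fix t assume t: "t \<in> R"
        have "C\<^sup>2 * Wt t * (Nt t * X2) \<le> C\<^sup>2 * (Nt t * Mt t * W) * (Nt t * X2)"
          using Wtle[OF t] Ntp[OF t] X20 by (intro mult_right_mono mult_left_mono) auto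
        then show "real (card R) * (C\<^sup>2 * Wt t * (Nt t * X2)) \<le> real (card R) * (C\<^sup>2 * (Nt t * Mt t * W) * (Nt t * X2))"
          by (intro mult_left_mono) auto
      qed simp
      also have "\<dots> = C\<^sup>2 * K0 * W * X2"
        unfolding K0_def by (simp add: sum_distrib_left sum_distrib_right power2_eq_square mult_ac)
      finally show "(\<Sum>c\<in>F. (cmod (hconv G (carrier G) H f xi c))\<^sup>2) \<le> C\<^sup>2 * K0 * W * X2" .
    qed simp
    have "l2_norm ?SG (hconv G (carrier G) H f xi) \<le> sqrt (C\<^sup>2 * K0 * W * X2)"
      unfolding l2_norm_def using bound by simp
    also have "\<dots> = C' * sqrt W * l2_norm ?SG xi"
      unfolding C'_def l2_norm_def X2_def[symmetric] using C K0p W0 X20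
      by (simp add: real_sqrt_mult)
    finally show ?thesis unfolding W_def .
  qed
  show ?thesis unfolding property_RD_def using LL s C'p main by blast
qed

end


theorem proposition3p15:
  fixes Gam :: "('a, 'b) monoid_scheme" and G H :: "'a set"
  assumes "group Gam"
    and "subgroup G Gam"
    and "finite ((\<lambda>x. G #>\<^bsub>Gam\<^esub> x) ` carrier Gam)"
    and "hecke_pair Gam G H"
    and "hecke_pair Gam (carrier Gam) H"
  shows "property_RD Gam G H \<longleftrightarrow> property_RD Gam (carrier Gam) H"
proof -
  have hkI: "hk Gam H"
  proof (rule hk.intro[OF assms(1)], rule hk_axioms.intro)
    show "subgroup H Gam" using assms(5) unfolding hecke_pair_def by blast
    fix x assume "x \<in> carrier Gam"
    then show "finite ((\<lambda>h. (H \<inter> (\<lambda>k. x \<otimes>\<^bsub>Gam\<^esub> k \<otimes>\<^bsub>Gam\<^esub> inv\<^bsub>Gam\<^esub> x) ` H) #>\<^bsub>Gam\<^esub> h) ` H)"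
      using assms(5) unfolding hecke_pair_def by blast
  qed
  have HG: "H \<subseteq> G" using assms(4) unfolding hecke_pair_def by blast
  show ?thesis
  proof
    assume "property_RD Gam G H"
    then show "property_RD Gam (carrier Gam) H" by (rule hk.dir2[OF hkI assms(2) HG assms(3)])
  next
    assume "property_RD Gam (carrier Gam) H"
    then show "property_RD Gam G H" by (rule hk.dir1[OF hkI assms(2) HG])
  qed
qed

end
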